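(* Let $(d(t),\,t\ge0)$ be a nonnegative, locally integrable demand function, let $(E_i(0),\,i\in\mathcal S)$ be a given initial energy configuration with $0\le E_i(0)\le\overline E_i$, and let $T\in(0,\infty]$. Among all discharge-only policies, the unserved energy demand $\int_0^T\max\bigl(d(t)-\sum_{i\in\mathcal S}r_i(t),0\bigr)\,dt$ is minimised by the GGDDF policy, and its minimum value is $$\max_{p\ge0}\bigl(e_D^{0,T}(p)-e_S^{0}(p)\bigr).$$
   Context: A finite set $\mathcal S$ of energy stores is given. Store $i\in\mathcal S$ has capacity $\overline E_i>0$ and maximum discharge rate $P_i>0$. A (discharge-only) policy is a choice of measurable rate functions $(r_i(t),\,t\ge0)$, $i\in\mathcal S$, with stored energies $E_i(t)=E_i(0)-\int_0^t r_i(u)\,du$, subject to $0\le E_i(t)\le\overline E_i$, $0\le r_i(t)\le P_i$ and $\sum_{i\in\mathcal S}r_i(t)\le d(t)$ for all $t\ge0$, where $(d(t),\,t\ge0)$ is a nonnegative demand function. The unserved energy over $[0,T]$ is $\int_0^T\max\bigl(d(t)-\sum_{i}r_i(t),0\bigr)dt$. Burst-power profile at time $t$: $s^t(u)=\sum_{i\in\mathcal S:\,E_i(t)/P_i\ge u}P_i$ for $u\ge 0$ (the quantity $E_i(t)/P_i$ is the discharge-duration of store $i$). Energy-power transform of the stores at time $t$: $e_S^t(p)=\int_0^\infty\max(0,s^t(u)-p)\,du$, $p\ge0$. Energy-power transform of the demand on $[t,T]$: $e_D^{t,T}(p)=\int_t^T\max(0,d(u)-p)\,du$, $p\ge0$ (with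 $T=\infty$ allowed). GGDDF (greedy greatest-discharge-duration-first) policy: at (almost) every time $t$, the total served rate is $\bar d(t)=\min\bigl(d(t),\sum_{i:E_i(t)>0}P_i\bigr)$, and it is allocated as follows: the nonempty stores are partitioned into groups $G_1,G_2,\dots$ of equal discharge-duration $E_i(t)/P_i$, listed in strictly decreasing order of that duration; letting $m$ be the least index with $\sum_{k\le m}\sum_{i\in G_k}P_i\ge\bar d(t)$, every store in $G_k$ with $k<m$ discharges at rate $P_i$, every store $i\in G_m$ discharges at rate $\lambda P_i$ with $\lambda\in(0,1]$ chosen so that $\sum_i r_i(t)=\bar d(t)$, and all other stores have rate $0$ (all rates are $0$ if $\bar d(t)=0$). *)

theory Defs
  imports "HOL-Analysis.Analysis"
begin

text \<open>Stores are indexed by a finite set S of some type 'i. A policy is a family of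
rate functions r i :: real \<Rightarrow> real (only t \<ge> 0 matters).\<close>

definition stored_energy :: "('i \<Rightarrow> real) \<Rightarrow> ('i \<Rightarrow> real \<Rightarrow> real) \<Rightarrow> 'i \<Rightarrow> real \<Rightarrow> real" where
  "stored_energy E0 r i t = E0 i - (LINT u:{0..t}|lborel. r i u)"

definition is_policy ::
  "'i set \<Rightarrow> ('i \<Rightarrow> real) \<Rightarrow> ('i \<Rightarrow> real) \<Rightarrow> ('i \<Rightarrow> real) \<Rightarrow> (real \<Rightarrow> real)
   \<Rightarrow> ('i \<Rightarrow> real \<Rightarrow> real) \<Rightarrow> bool" where
  "is_policy S Ebar P E0 d r \<longleftrightarrow>
     (\<forall>i\<in>S. r i \<in> borel_measurable lborel) \<and>
     (\<forall>t\<ge>0. \<forall>i\<in>S. 0 \<le> stored_energy E0 r i t \<and> stored_energy E0 r i t \<le> Ebar i) \<and>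
     (\<forall>t\<ge>0. \<forall>i\<in>S. 0 \<le> r i t \<and> r i t \<le> P i) \<and>
     (\<forall>t\<ge>0. (\<Sum>i\<in>S. r i t) \<le> d t)"

definition unserved :: "'i set \<Rightarrow> (real \<Rightarrow> real) \<Rightarrow> ('i \<Rightarrow> real \<Rightarrow> real) \<Rightarrow> ereal \<Rightarrow> ennreal" where
  "unserved S d r T =
     (\<integral>\<^sup>+ t. indicator {t. 0 \<le> t \<and> ereal t \<le> T} t * ennreal (max (d t - (\<Sum>i\<in>S. r i t)) 0) \<partial>lborel)"

definition burst_power :: "'i set \<Rightarrow> ('i \<Rightarrow> real) \<Rightarrow> ('i \<Rightarrow> real) \<Rightarrow> real \<Rightarrow> real" where
  "burst_power S P E u = (\<Sum>i\<in>{i\<in>S. E i / P i \<ge> u}. P i)"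

definition ep_stores :: "'i set \<Rightarrow> ('i \<Rightarrow> real) \<Rightarrow> ('i \<Rightarrow> real) \<Rightarrow> real \<Rightarrow> ennreal" where
  "ep_stores S P E p =
     (\<integral>\<^sup>+ u. indicator {0..} u * ennreal (max 0 (burst_power S P E u - p)) \<partial>lborel)"

definition ep_demand :: "(real \<Rightarrow> real) \<Rightarrow> real \<Rightarrow> ereal \<Rightarrow> real \<Rightarrow> ennreal" where
  "ep_demand d t T p =
     (\<integral>\<^sup>+ u. indicator {u. t \<le> u \<and> ereal u \<le> T} u * ennreal (max 0 (d u - p)) \<partial>lborel)"

text \<open>The groups of equal discharge duration E i / P i are written out
  directly: G_m is the group with duration theta, the groups G_k, k < m, are those
  nonempty stores with strictly larger duration.\<close>
definition ggddf_rates :: "'i set \<Rightarrow> ('i \<Rightarrow> real) \<Rightarrow> ('i \<Rightarrow> real) \<Rightarrow> real \<Rightarrow> ('i \<Rightarrow> real) \<Rightarrow> bool" where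
  "ggddf_rates S P E dv rho \<longleftrightarrow>
     (let dbar = min dv (\<Sum>i\<in>{i\<in>S. E i > 0}. P i) in
       (dbar = 0 \<longrightarrow> (\<forall>i\<in>S. rho i = 0)) \<and>
       (dbar \<noteq> 0 \<longrightarrow>
          (\<exists>\<theta> lam. (\<exists>j\<in>S. E j > 0 \<and> E j / P j = \<theta>) \<and> 0 < lam \<and> lam \<le> 1 \<and>
                 (\<forall>i\<in>S. rho i = (if E i > 0 \<and> E i / P i > \<theta> then P i
                                   else if E i > 0 \<and> E i / P i = \<theta> then lam * P i
                                   else 0)) \<and>
                 (\<Sum>i\<in>S. rho i) = dbar)))"

definition is_ggddf_policy ::
  "'i set \<Rightarrow> ('i \<Rightarrow> real) \<Rightarrow> ('i \<Rightarrow> real) \<Rightarrow> ('i \<Rightarrow> real) \<Rightarrow> (real \<Rightarrow> real)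
   \<Rightarrow> ('i \<Rightarrow> real \<Rightarrow> real) \<Rightarrow> bool" where
  "is_ggddf_policy S Ebar P E0 d r \<longleftrightarrow>
     is_policy S Ebar P E0 d r \<and>
     (AE t in lborel. t \<ge> 0 \<longrightarrow>
        ggddf_rates S P (\<lambda>i. stored_energy E0 r i t) (d t) (\<lambda>i. r i t))"

end

theory Submission
  imports Defs
begin


lemma bnd_set_integrable:
  fixes f :: "real \<Rightarrow> real"
  assumes "f \<in> borel_measurable lborel" "\<And>t. \<bar>f t\<bar> \<le> C"
  shows "set_integrable lborel {a..b} f"
  unfolding set_integrable_def
  by (rule integrableI_bounded_set_indicator[where B=C]) (use assms in \<open>auto simp: emeasure_lborel_Icc_eq\<close>)

lemma bnd_integrable_on:
  fixes f :: "real \<Rightarrow> real"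
  assumes "f \<in> borel_measurable lborel" "\<And>t. \<bar>f t\<bar> \<le> C"
  shows "f integrable_on {a..b}"
  using set_borel_integral_eq_integral(1)[OF bnd_set_integrable[OF assms]] .

lemma bnd_LINT_eq:
  fixes f :: "real \<Rightarrow> real"
  assumes "f \<in> borel_measurable lborel" "\<And>t. \<bar>f t\<bar> \<le> C"
  shows "(LINT x:{a..b}|lborel. f x) = integral {a..b} f"
  using set_borel_integral_eq_integral(2)[OF bnd_set_integrable[OF assms]] .

lemma indef_cont:
  fixes f :: "real \<Rightarrow> real"
  assumes "f \<in> borel_measurable lborel" "\<And>t. \<bar>f t\<bar> \<le> C"
  shows "continuous_on {a..b} (\<lambda>x. integral {a..x} f)"
  by (rule indefinite_integral_continuous_1[OF bnd_integrable_on[OF assms]])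

lemma integral_split:
  fixes f :: "real \<Rightarrow> real"
  assumes "f \<in> borel_measurable lborel" "\<And>t. \<bar>f t\<bar> \<le> C" "a \<le> c" "c \<le> b"
  shows "integral {a..b} f = integral {a..c} f + integral {c..b} f"
  using Henstock_Kurzweil_Integration.integral_combine[OF assms(3,4) bnd_integrable_on[OF assms(1,2)]] by simp

lemma D_meas:
  fixes d :: "real \<Rightarrow> real"
  assumes "\<forall>a\<ge>0. set_integrable lborel {0..a} d"
  shows "(\<lambda>t. if 0 \<le> t then d t else 0) \<in> borel_measurable lborel"
proof (rule borel_measurable_LIMSEQ_real)
  fix n :: nat
  have "integrable lborel (\<lambda>x. indicator {0..real n} x *\<^sub>R d x)"
    using assms unfolding set_integrable_def by auto
  then show "(\<lambda>x. indicator {0..real n} x *\<^sub>R d x) \<in> borel_measurable lborel" by auto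
next
  fix x :: real
  show "(\<lambda>n. indicator {0..real n} x *\<^sub>R d x) \<longlonglongrightarrow> (if 0 \<le> x then d x else 0)"
  proof (rule tendsto_eventually)
    obtain N :: nat where "x \<le> real N" using real_arch_simple by blast
    then show "\<forall>\<^sub>F n in sequentially. indicator {0..real n} x *\<^sub>R d x = (if 0 \<le> x then d x else 0)"
      unfolding eventually_sequentially
      by (intro exI[of _ N]) (auto simp: indicator_def)
  qed
qed


definition Aq :: "'i set \<Rightarrow> ('i \<Rightarrow> real) \<Rightarrow> ('i \<Rightarrow> real) \<Rightarrow> real \<Rightarrow> real" where
  "Aq S P E v = (\<Sum>j\<in>{j\<in>S. 0 < E j \<and> v < E j / P j}. P j)"
definition Bq :: "'i set \<Rightarrow> ('i \<Rightarrow> real) \<Rightarrow> ('i \<Rightarrow> real) \<Rightarrow> real \<Rightarrow> real" where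
  "Bq S P E v = (\<Sum>j\<in>{j\<in>S. 0 < E j \<and> E j / P j = v}. P j)"
definition lam :: "'i set \<Rightarrow> ('i \<Rightarrow> real) \<Rightarrow> ('i \<Rightarrow> real) \<Rightarrow> real \<Rightarrow> real \<Rightarrow> real" where
  "lam S P E v x = max 0 (min 1 ((x - Aq S P E v) / Bq S P E v))"

lemma Aq_nonneg: "\<forall>i\<in>S. P i > 0 \<Longrightarrow> 0 \<le> Aq S P E v"
  unfolding Aq_def by (rule sum_nonneg) auto
lemma Bq_nonneg: "\<forall>i\<in>S. P i > 0 \<Longrightarrow> 0 \<le> Bq S P E v"
  unfolding Bq_def by (rule sum_nonneg) auto

lemma lam_bounds: "0 \<le> lam S P E v x" "lam S P E v x \<le> 1"
  unfolding lam_def by auto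

lemma Bq_pos:
  assumes "finite S" "\<forall>i\<in>S. P i > 0" "i \<in> S" "0 < E i"
  shows "0 < Bq S P E (E i / P i)"
proof -
  have "P i \<le> Bq S P E (E i / P i)"
    unfolding Bq_def using assms by (intro member_le_sum) auto
  then show ?thesis using assms by force
qed

lemma Bq_zero:
  assumes "\<forall>i\<in>S. P i > 0"
  shows "Bq S P E 0 = 0"
proof -
  have h: "{j\<in>S. 0 < E j \<and> E j / P j = 0} = {}" using assms by fastforce
  show ?thesis unfolding Bq_def h by simp
qed

lemma lam_zero: "\<forall>i\<in>S. P i > 0 \<Longrightarrow> lam S P E 0 x = 0"
  unfolding lam_def by (simp add: Bq_zero)

lemma AB_le:
  assumes "finite S" "\<forall>i\<in>S. P i > 0" "v < w"
  shows "Aq S P E w + Bq S P E w \<le> Aq S P E v"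
proof -
  have "Aq S P E w + Bq S P E w = (\<Sum>j\<in>{j\<in>S. 0 < E j \<and> w < E j / P j} \<union> {j\<in>S. 0 < E j \<and> E j / P j = w}. P j)"
    unfolding Aq_def Bq_def using assms by (subst sum.union_disjoint) auto
  also have "\<dots> \<le> Aq S P E v"
    unfolding Aq_def using assms by (intro sum_mono2) auto
  finally show ?thesis .
qed

lemma lam_one:
  assumes "0 < Bq S P E v" "Aq S P E v + Bq S P E v \<le> x"
  shows "lam S P E v x = 1"
proof -
  have "1 \<le> (x - Aq S P E v) / Bq S P E v" using assms by (simp add: field_simps)
  then show ?thesis unfolding lam_def by simp
qed

lemma lam_zero':
  assumes "\<forall>i\<in>S. P i > 0" "x \<le> Aq S P E v"
  shows "lam S P E v x = 0"
proof -
  have "(x - Aq S P E v) / Bq S P E v \<le> 0"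
    using assms Bq_nonneg[OF assms(1)] by (intro divide_nonpos_nonneg) auto
  then show ?thesis unfolding lam_def by simp
qed

definition grates :: "'i set \<Rightarrow> ('i \<Rightarrow> real) \<Rightarrow> ('i \<Rightarrow> real) \<Rightarrow> real \<Rightarrow> 'i \<Rightarrow> real" where
  "grates S P E x i = P i * lam S P E (E i / P i) x"

lemma lemmaG:
  assumes fin: "finite S" and Ppos: "\<forall>i\<in>S. P i > 0" and Enn: "\<forall>i\<in>S. 0 \<le> E i" and x: "0 \<le> x"
  shows "ggddf_rates S P E x (grates S P E x)"
proof -
  define Ne where "Ne = {i\<in>S. E i > 0}"
  define tot where "tot = (\<Sum>i\<in>Ne. P i)"
  define A where "A = Aq S P E"
  define B where "B = Bq S P E"
  have finNe: "finite Ne" using fin unfolding Ne_def by auto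
  have tot_nn: "0 \<le> tot" unfolding tot_def Ne_def using Ppos by (intro sum_nonneg) auto
  have tot0: "tot = 0 \<longleftrightarrow> Ne = {}"
  proof
    assume "tot = 0"
    then have "\<forall>i\<in>Ne. P i = 0" unfolding tot_def
      using sum_nonneg_eq_0_iff[OF finNe] Ppos unfolding Ne_def by (metis (mono_tags, lifting) mem_Collect_eq order_less_imp_le)
    then show "Ne = {}" using Ppos unfolding Ne_def by force
  qed (simp add: tot_def)
  show ?thesis
    unfolding ggddf_rates_def Let_def Ne_def[symmetric] tot_def[symmetric]
  proof (intro conjI impI)
    assume "min x tot = 0"
    then have "x = 0 \<or> tot = 0" by (metis min_def)
    then have cases: "x = 0 \<or> Ne = {}" using tot0 by blast
    show "\<forall>i\<in>S. grates S P E x i = 0"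
    proof
      fix i assume i: "i \<in> S"
      show "grates S P E x i = 0"
      proof (cases "E i > 0")
        case True
        then have "x = 0" using cases i unfolding Ne_def by auto
        then show ?thesis unfolding grates_def using lam_zero'[OF Ppos, of x] Aq_nonneg[OF Ppos] by simp
      next
        case False
        then have "E i = 0" using Enn i by force
        then show ?thesis unfolding grates_def using lam_zero[OF Ppos] by simp
      qed
    qed
  next
    assume dbar: "min x tot \<noteq> 0"
    then have xpos: "0 < x" and Nne: "Ne \<noteq> {}" using x tot0 tot_nn by (auto simp: min_def split: if_splits)
    define \<Theta> where "\<Theta> = {E j / P j |j. j \<in> Ne \<and> A (E j / P j) < x}"
    have finTh: "finite \<Theta>" unfolding \<Theta>_def using finNe by auto
    define M where "M = Max ((\<lambda>j. E j / P j) ` Ne)"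
    have "M \<in> (\<lambda>j. E j / P j) ` Ne" unfolding M_def using finNe Nne by (intro Max_in) auto
    then obtain jm where jm: "jm \<in> Ne" "E jm / P jm = M" by auto
    have jmax: "\<forall>j\<in>Ne. E j / P j \<le> M" unfolding M_def using finNe by auto
    have "A M = 0" unfolding A_def Aq_def using jmax unfolding Ne_def
      by (intro sum.neutral) (auto simp: not_less[symmetric])
    then have "M \<in> \<Theta>" unfolding \<Theta>_def using jm xpos by force
    then have ThNe: "\<Theta> \<noteq> {}" by auto
    define \<theta> where "\<theta> = Min \<Theta>"
    have "\<theta> \<in> \<Theta>" unfolding \<theta>_def using finTh ThNe by (rule Min_in)
    then obtain j0 where j0: "j0 \<in> Ne" "E j0 / P j0 = \<theta>" "A \<theta> < x" unfolding \<Theta>_def by auto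
    have thmin: "\<And>j. j \<in> Ne \<Longrightarrow> A (E j / P j) < x \<Longrightarrow> \<theta> \<le> E j / P j"
      unfolding \<theta>_def using finTh by (intro Min_le) (auto simp: \<Theta>_def)
    have Bpos: "0 < B \<theta>" unfolding B_def using Bq_pos[OF fin Ppos, of j0 E] j0 unfolding Ne_def by auto
    have thpos: "0 < \<theta>" using j0 Ppos unfolding Ne_def by auto
    define l0 where "l0 = lam S P E \<theta> x"
    have l0pos: "0 < l0"
    proof -
      have "0 < (x - A \<theta>) / B \<theta>" using j0 Bpos by auto
      then show ?thesis unfolding l0_def lam_def A_def B_def by auto
    qed
    have l0le: "l0 \<le> 1" unfolding l0_def by (rule lam_bounds)
    have rates: "\<forall>i\<in>S. grates S P E x i = (if E i > 0 \<and> E i / P i > \<theta> then P i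
                                   else if E i > 0 \<and> E i / P i = \<theta> then l0 * P i else 0)"
    proof
      fix i assume i: "i \<in> S"
      show "grates S P E x i = (if E i > 0 \<and> E i / P i > \<theta> then P i
                                   else if E i > 0 \<and> E i / P i = \<theta> then l0 * P i else 0)"
      proof (cases "E i > 0")
        case False
        then have "E i = 0" using Enn i by force
        then show ?thesis unfolding grates_def using lam_zero[OF Ppos] by simp
      next
        case Ei: True
        consider "E i / P i > \<theta>" | "E i / P i = \<theta>" | "E i / P i < \<theta>" by linarith
        then show ?thesis
        proof cases
          case 1
          have "A (E i / P i) + B (E i / P i) \<le> A \<theta>" unfolding A_def B_def using AB_le[OF fin Ppos 1] .
          then have "lam S P E (E i / P i) x = 1" using j0(3) Bq_pos[OF fin Ppos i, of E, OF Ei]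
            by (intro lam_one) (auto simp: A_def B_def)
          then show ?thesis using 1 Ei unfolding grates_def by simp
        next
          case 2 then show ?thesis using Ei unfolding grates_def l0_def by simp
        next
          case 3
          have "\<not> A (E i / P i) < x" using thmin[of i] 3 i Ei unfolding Ne_def by force
          then have "lam S P E (E i / P i) x = 0" using lam_zero'[OF Ppos] by (simp add: A_def)
          then show ?thesis using 3 unfolding grates_def by simp
        qed
      qed
    qed
    define N1 where "N1 = {i\<in>S. E i > 0 \<and> E i / P i > \<theta>}"
    define N2 where "N2 = {i\<in>S. E i > 0 \<and> E i / P i = \<theta>}"
    define N3 where "N3 = {i\<in>S. E i > 0 \<and> E i / P i < \<theta>}"
    have AN1: "A \<theta> = sum P N1" unfolding A_def Aq_def N1_def by simp
    have BN2: "B \<theta> = sum P N2" unfolding B_def Bq_def N2_def by simp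
    have sumr: "(\<Sum>i\<in>S. grates S P E x i) = A \<theta> + l0 * B \<theta>"
    proof -
      have "(\<Sum>i\<in>S. grates S P E x i) = (\<Sum>i\<in>S. (if i \<in> N1 then P i else 0) + (if i \<in> N2 then l0 * P i else 0))"
        using rates thpos by (intro sum.cong) (auto simp: N1_def N2_def)
      also have "\<dots> = sum P N1 + l0 * sum P N2"
        using fin by (simp add: sum.distrib sum.If_cases sum_distrib_left N1_def N2_def Int_def)
      finally show ?thesis using AN1 BN2 by simp
    qed
    have totsplit: "tot = A \<theta> + B \<theta> + sum P N3"
    proof -
      have "Ne = N1 \<union> N2 \<union> N3" unfolding Ne_def N1_def N2_def N3_def by auto
      then have "tot = sum P (N1 \<union> N2 \<union> N3)" unfolding tot_def by simp
      also have "\<dots> = sum P N1 + sum P N2 + sum P N3"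
      proof -
        have f: "finite N1" "finite N2" "finite N3" using fin unfolding N1_def N2_def N3_def by auto
        have "sum P (N1 \<union> N2 \<union> N3) = sum P (N1 \<union> N2) + sum P N3"
          using f by (intro sum.union_disjoint) (auto simp: N1_def N2_def N3_def)
        also have "sum P (N1 \<union> N2) = sum P N1 + sum P N2"
          using f by (intro sum.union_disjoint) (auto simp: N1_def N2_def N3_def)
        finally show ?thesis .
      qed
      finally show ?thesis using AN1 BN2 by simp
    qed
    have N3nn: "0 \<le> sum P N3" using Ppos unfolding N3_def by (intro sum_nonneg) auto
    have sumeq: "(\<Sum>i\<in>S. grates S P E x i) = min x tot"
    proof (cases "x \<le> A \<theta> + B \<theta>")
      case True
      have "l0 = (x - A \<theta>) / B \<theta>"
        using True Bpos j0(3) unfolding l0_def lam_def A_def B_def by (auto simp: field_simps)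
      then have "(\<Sum>i\<in>S. grates S P E x i) = x" using sumr Bpos by simp
      then show ?thesis using True totsplit N3nn by simp
    next
      case False
      have "l0 = 1" unfolding l0_def using Bpos False by (intro lam_one) (auto simp: A_def B_def)
      have "N3 = {}"
      proof (rule ccontr)
        assume "N3 \<noteq> {}"
        have finN3: "finite N3" using fin unfolding N3_def by auto
        define M3 where "M3 = Max ((\<lambda>j. E j / P j) ` N3)"
        have "M3 \<in> (\<lambda>j. E j / P j) ` N3" unfolding M3_def using finN3 \<open>N3 \<noteq> {}\<close> by (intro Max_in) auto
        then obtain k where k: "k \<in> N3" "E k / P k = M3" by auto
        have kmax: "\<forall>j\<in>N3. E j / P j \<le> M3" unfolding M3_def using finN3 by auto
        have "{j\<in>S. 0 < E j \<and> M3 < E j / P j} = N1 \<union> N2"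
          using k kmax unfolding N1_def N2_def N3_def by force
        then have "A M3 = A \<theta> + B \<theta>" unfolding A_def Aq_def using AN1 BN2 fin
          by (simp add: A_def B_def, subst sum.union_disjoint) (auto simp: N1_def N2_def)
        then have "A (E k / P k) < x" using False k by simp
        then have "\<theta> \<le> E k / P k" using thmin[of k] k unfolding N3_def Ne_def by auto
        then show False using k unfolding N3_def by auto
      qed
      then show ?thesis using sumr \<open>l0 = 1\<close> False totsplit by simp
    qed
    show "\<exists>\<theta> lam. (\<exists>j\<in>S. 0 < E j \<and> E j / P j = \<theta>) \<and> 0 < lam \<and> lam \<le> 1 \<and>
          (\<forall>i\<in>S. grates S P E x i = (if 0 < E i \<and> \<theta> < E i / P i then P i
                                   else if 0 < E i \<and> E i / P i = \<theta> then lam * P i else 0)) \<and>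
          (\<Sum>i\<in>S. grates S P E x i) = min x tot"
      using j0 l0pos l0le rates sumeq unfolding Ne_def by (intro exI[of _ \<theta>] exI[of _ l0]) auto
  qed
qed


definition lamv :: "'i set \<Rightarrow> ('i \<Rightarrow> real) \<Rightarrow> ('i \<Rightarrow> real) \<Rightarrow> (real \<Rightarrow> real) \<Rightarrow> real \<Rightarrow> real \<Rightarrow> real \<Rightarrow> real" where
  "lamv S P E D t0 v s = (if t0 \<le> s then lam S P E v (D s) else 0)"
definition Phi :: "'i set \<Rightarrow> ('i \<Rightarrow> real) \<Rightarrow> ('i \<Rightarrow> real) \<Rightarrow> (real \<Rightarrow> real) \<Rightarrow> real \<Rightarrow> real \<Rightarrow> real \<Rightarrow> real" where
  "Phi S P E D t0 t v = v - integral {t0..t} (lamv S P E D t0 v)"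
definition psi :: "'i set \<Rightarrow> ('i \<Rightarrow> real) \<Rightarrow> ('i \<Rightarrow> real) \<Rightarrow> (real \<Rightarrow> real) \<Rightarrow> real \<Rightarrow> 'i \<Rightarrow> real \<Rightarrow> real" where
  "psi S P E D t0 i s = P i * lamv S P E D t0 (E i / P i) s"
definition cls :: "'i set \<Rightarrow> ('i \<Rightarrow> real) \<Rightarrow> ('i \<Rightarrow> real) \<Rightarrow> real set" where
  "cls S P E = (\<lambda>i. E i / P i) ` S \<union> {0}"

lemma ggddf_rates_cong:
  assumes "\<forall>i\<in>S. E i = E' i" "\<forall>i\<in>S. \<rho> i = \<rho>' i"
  shows "ggddf_rates S P E x \<rho> = ggddf_rates S P E' x \<rho>'"
proof -
  have s1: "{i\<in>S. E i > 0} = {i\<in>S. E' i > 0}" using assms by auto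
  have s2: "(\<Sum>i\<in>S. \<rho> i) = (\<Sum>i\<in>S. \<rho>' i)" using assms by (intro sum.cong) auto
  show ?thesis unfolding ggddf_rates_def Let_def s1 s2 using assms
    by (intro arg_cong2[where f="(\<and>)"] arg_cong2[where f="(\<longrightarrow>)"] refl ex_cong1 conj_cong ball_cong bex_cong) auto
qed

lemma rule_sum_le:
  assumes "ggddf_rates S P E x \<rho>" "0 \<le> x"
  shows "(\<Sum>i\<in>S. \<rho> i) \<le> x"
proof -
  define db where "db = min x (\<Sum>i\<in>{i\<in>S. E i > 0}. P i)"
  have "db \<le> x" unfolding db_def by simp
  show ?thesis
  proof (cases "db = 0")
    case True
    then have "\<forall>i\<in>S. \<rho> i = 0" using assms(1) unfolding ggddf_rates_def Let_def db_def by auto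
    then show ?thesis using assms(2) by simp
  next
    case False
    then have "(\<Sum>i\<in>S. \<rho> i) = db" using assms(1) unfolding ggddf_rates_def Let_def db_def by auto
    then show ?thesis using \<open>db \<le> x\<close> by simp
  qed
qed

context
  fixes S :: "'i set" and P :: "'i \<Rightarrow> real" and D :: "real \<Rightarrow> real"
  assumes fin: "finite S" and Ppos: "\<forall>i\<in>S. P i > 0"
    and Dm: "D \<in> borel_measurable lborel" and Dnn: "\<forall>t. 0 \<le> D t"
begin

lemma lamv_meas: "lamv S P E D t0 v \<in> borel_measurable lborel"
  unfolding lamv_def lam_def using Dm by measurable

lemma lamv_bnd: "\<bar>lamv S P E D t0 v s\<bar> \<le> 1" "0 \<le> lamv S P E D t0 v s"
  unfolding lamv_def using lam_bounds[of S P E v "D s"] by auto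

lemma psi_meas: "psi S P E D t0 i \<in> borel_measurable lborel"
  unfolding psi_def using lamv_meas by measurable

lemma psi_bnd: "i \<in> S \<Longrightarrow> \<bar>psi S P E D t0 i s\<bar> \<le> P i" "i \<in> S \<Longrightarrow> 0 \<le> psi S P E D t0 i s"
  "i \<in> S \<Longrightarrow> psi S P E D t0 i s \<le> P i"
  unfolding psi_def using lamv_bnd[of E t0 "E i / P i" s] Ppos
  by (auto simp: abs_mult mult_left_le)

lemma psi_integral:
  "integral {t0..t} (psi S P E D t0 i) = P i * integral {t0..t} (lamv S P E D t0 (E i / P i))"
  unfolding psi_def by (rule integral_mult_right)

lemma state_Phi:
  assumes "i \<in> S"
  shows "E i - integral {t0..t} (psi S P E D t0 i) = P i * Phi S P E D t0 t (E i / P i)"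
proof -
  have p: "P i \<noteq> 0" using Ppos assms by auto
  show ?thesis unfolding psi_integral Phi_def using p by (simp add: right_diff_distrib)
qed

lemma Phi_zero: "Phi S P E D t0 t 0 = 0"
proof -
  have "lamv S P E D t0 0 = (\<lambda>s. 0)"
    using lam_zero[OF Ppos, of E] unfolding lamv_def by (intro ext) simp
  then show ?thesis unfolding Phi_def by simp
qed

lemma Phi_t0: "Phi S P E D t0 t0 v = v"
  unfolding Phi_def by simp

lemma Phi_cont: "continuous_on {t0..b} (\<lambda>t. Phi S P E D t0 t v)"
  unfolding Phi_def
  by (intro continuous_intros indef_cont[OF lamv_meas lamv_bnd(1)])

end


context
  fixes S :: "'i set" and P :: "'i \<Rightarrow> real" and D :: "real \<Rightarrow> real"
  assumes fin: "finite S" and Ppos: "\<forall>i\<in>S. P i > 0"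
    and Dm: "D \<in> borel_measurable lborel" and Dnn: "\<forall>t. 0 \<le> D t"
begin

lemma good_rule:
  assumes Enn: "\<forall>i\<in>S. 0 \<le> E i" and t: "t0 \<le> t"
    and good: "\<forall>v\<in>cls S P E. \<forall>w\<in>cls S P E. v < w \<longrightarrow> Phi S P E D t0 t v < Phi S P E D t0 t w"
  shows "\<forall>i\<in>S. 0 \<le> E i - integral {t0..t} (psi S P E D t0 i)"
    and "ggddf_rates S P (\<lambda>i. E i - integral {t0..t} (psi S P E D t0 i)) (D t) (\<lambda>i. psi S P E D t0 i t)"
proof -
  define \<Phi> where "\<Phi> = Phi S P E D t0 t"
  define E' where "E' = (\<lambda>i. E i - integral {t0..t} (psi S P E D t0 i))"
  have E'eq: "\<And>i. i \<in> S \<Longrightarrow> E' i = P i * \<Phi> (E i / P i)"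
    unfolding E'_def \<Phi>_def using state_Phi[OF fin Ppos Dm Dnn] by blast
  have vin: "\<And>i. i \<in> S \<Longrightarrow> E i / P i \<in> cls S P E" unfolding cls_def by auto
  have zin: "0 \<in> cls S P E" unfolding cls_def by auto
  have clsnn: "\<And>v. v \<in> cls S P E \<Longrightarrow> 0 \<le> v" unfolding cls_def using Enn Ppos by auto
  have less_iff: "\<And>a b. a \<in> cls S P E \<Longrightarrow> b \<in> cls S P E \<Longrightarrow> \<Phi> a < \<Phi> b \<longleftrightarrow> a < b"
    using good unfolding \<Phi>_def by (metis less_asym' linorder_neqE_linordered_idom)
  have eq_iff: "\<And>a b. a \<in> cls S P E \<Longrightarrow> b \<in> cls S P E \<Longrightarrow> \<Phi> a = \<Phi> b \<longleftrightarrow> a = b"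
    using good unfolding \<Phi>_def by (metis less_irrefl linorder_neqE_linordered_idom)
  have Phi0: "\<Phi> 0 = 0" unfolding \<Phi>_def using Phi_zero[OF fin Ppos Dm Dnn] by blast
  have Phinn: "\<And>v. v \<in> cls S P E \<Longrightarrow> 0 \<le> \<Phi> v"
    using less_iff[OF zin] clsnn Phi0 by (metis order_le_less)
  show nn: "\<forall>i\<in>S. 0 \<le> E i - integral {t0..t} (psi S P E D t0 i)"
    using E'eq Phinn vin Ppos unfolding E'_def by (metis less_eq_real_def mult_nonneg_nonneg)
  have ratio: "\<And>i. i \<in> S \<Longrightarrow> E' i / P i = \<Phi> (E i / P i)"
    using E'eq Ppos by (metis less_irrefl nonzero_mult_div_cancel_left)
  have pos_iff: "\<And>j. j \<in> S \<Longrightarrow> 0 < E' j \<longleftrightarrow> 0 < E j"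
  proof -
    fix j assume j: "j \<in> S"
    have pj: "0 < P j" using Ppos j by auto
    have "0 < E' j \<longleftrightarrow> 0 < \<Phi> (E j / P j)" using E'eq[OF j] pj by (simp add: zero_less_mult_iff)
    also have "\<dots> \<longleftrightarrow> 0 < E j / P j" using less_iff[OF zin vin[OF j]] Phi0 by simp
    also have "\<dots> \<longleftrightarrow> 0 < E j" using pj by (simp add: zero_less_divide_iff)
    finally show "0 < E' j \<longleftrightarrow> 0 < E j" .
  qed
  have rates: "\<forall>i\<in>S. grates S P E' (D t) i = psi S P E D t0 i t"
  proof
    fix i assume i: "i \<in> S"
    have sA: "{j\<in>S. 0 < E' j \<and> \<Phi> (E i / P i) < E' j / P j} = {j\<in>S. 0 < E j \<and> E i / P i < E j / P j}"
      using pos_iff ratio less_iff vin i by auto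
    have sB: "{j\<in>S. 0 < E' j \<and> E' j / P j = \<Phi> (E i / P i)} = {j\<in>S. 0 < E j \<and> E j / P j = E i / P i}"
      using pos_iff ratio eq_iff vin i by auto
    have "lam S P E' (E' i / P i) (D t) = lam S P E (E i / P i) (D t)"
      unfolding lam_def Aq_def Bq_def ratio[OF i] sA sB ..
    then show "grates S P E' (D t) i = psi S P E D t0 i t"
      unfolding grates_def psi_def lamv_def using t by simp
  qed
  have "ggddf_rates S P E' (D t) (grates S P E' (D t))"
    by (rule lemmaG[OF fin Ppos]) (use nn Dnn in \<open>auto simp: E'_def\<close>)
  then show "ggddf_rates S P (\<lambda>i. E i - integral {t0..t} (psi S P E D t0 i)) (D t) (\<lambda>i. psi S P E D t0 i t)"
    unfolding E'_def[symmetric] using ggddf_rates_cong[of S E' E' "grates S P E' (D t)" "\<lambda>i. psi S P E D t0 i t"] rates by auto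
qed

end


definition Qp :: "'i set \<Rightarrow> ('i \<Rightarrow> real) \<Rightarrow> (real \<Rightarrow> real) \<Rightarrow> real \<Rightarrow> ('i \<Rightarrow> real) \<Rightarrow> ('i \<Rightarrow> real \<Rightarrow> real) \<Rightarrow> bool" where
  "Qp S P D t0 E \<rho> \<longleftrightarrow> (\<forall>i\<in>S. \<rho> i \<in> borel_measurable lborel) \<and> (\<forall>i\<in>S. \<forall>t. 0 \<le> \<rho> i t \<and> \<rho> i t \<le> P i) \<and>
     (\<forall>t\<ge>t0. (\<Sum>i\<in>S. \<rho> i t) \<le> D t) \<and> (\<forall>i\<in>S. \<forall>t\<ge>t0. integral {t0..t} (\<rho> i) \<le> E i) \<and>
     (AE t in lborel. t0 \<le> t \<longrightarrow> ggddf_rates S P (\<lambda>i. E i - integral {t0..t} (\<rho> i)) (D t) (\<lambda>i. \<rho> i t))"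

context
  fixes S :: "'i set" and P :: "'i \<Rightarrow> real" and D :: "real \<Rightarrow> real"
  assumes fin: "finite S" and Ppos: "\<forall>i\<in>S. P i > 0"
    and Dm: "D \<in> borel_measurable lborel" and Dnn: "\<forall>t. 0 \<le> D t"
begin

lemma exist_induct:
  "card (cls S P E) \<le> n \<Longrightarrow> \<forall>i\<in>S. 0 \<le> E i \<Longrightarrow> \<exists>\<rho>. Qp S P D t0 E \<rho>"
proof (induction n arbitrary: t0 E)
  case 0
  have "finite (cls S P E)" "cls S P E \<noteq> {}" using fin unfolding cls_def by auto
  then show ?case using 0 by (simp add: card_gt_0_iff[symmetric])
next
  case (Suc n)
  note Enn = Suc.prems(2)
  define \<Phi> where "\<Phi> = Phi S P E D t0"
  define \<psi> where "\<psi> = psi S P E D t0"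
  define C where "C = cls S P E"
  have finC: "finite C" unfolding C_def cls_def using fin by auto
  have zin: "0 \<in> C" unfolding C_def cls_def by auto
  have vin: "\<And>i. i \<in> S \<Longrightarrow> E i / P i \<in> C" unfolding C_def cls_def by auto
  have Cnn: "\<And>v. v \<in> C \<Longrightarrow> 0 \<le> v" unfolding C_def cls_def using Enn Ppos by auto
  note gr = good_rule[OF fin Ppos Dm Dnn Enn]
  have psim: "\<And>i. \<psi> i \<in> borel_measurable lborel" unfolding \<psi>_def by (rule psi_meas[OF fin Ppos Dm Dnn])
  have psib: "\<And>i s. i \<in> S \<Longrightarrow> 0 \<le> \<psi> i s \<and> \<psi> i s \<le> P i"
    unfolding \<psi>_def using psi_bnd[OF fin Ppos Dm Dnn] by blast
  have Phicont: "\<And>b v. continuous_on {t0..b} (\<lambda>t. \<Phi> t v)"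
    unfolding \<Phi>_def by (rule Phi_cont[OF fin Ppos Dm Dnn])
  have Phi0: "\<And>t. \<Phi> t 0 = 0" unfolding \<Phi>_def by (rule Phi_zero[OF fin Ppos Dm Dnn])
  have Phit0: "\<And>v. \<Phi> t0 v = v" unfolding \<Phi>_def by (rule Phi_t0[OF fin Ppos Dm Dnn])
  have stPhi: "\<And>i t. i \<in> S \<Longrightarrow> E i - integral {t0..t} (\<psi> i) = P i * \<Phi> t (E i / P i)"
    unfolding \<psi>_def \<Phi>_def by (rule state_Phi[OF fin Ppos Dm Dnn])
  define good where "good t \<longleftrightarrow> (\<forall>v\<in>C. \<forall>w\<in>C. v < w \<longrightarrow> \<Phi> t v < \<Phi> t w)" for t
  have goodrule: "\<And>t. t0 \<le> t \<Longrightarrow> good t \<Longrightarrow> (\<forall>i\<in>S. 0 \<le> E i - integral {t0..t} (\<psi> i)) \<and>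
      ggddf_rates S P (\<lambda>i. E i - integral {t0..t} (\<psi> i)) (D t) (\<lambda>i. \<psi> i t)"
    using gr unfolding good_def \<Phi>_def \<psi>_def C_def by blast
  show ?case
  proof (cases "\<forall>t\<ge>t0. good t")
    case True
    show ?thesis
    proof (intro exI[of _ \<psi>])
      show "Qp S P D t0 E \<psi>"
        unfolding Qp_def
      proof (intro conjI ballI allI impI)
        fix t assume t: "t0 \<le> t"
        then have gt: "good t" using True by auto
        show "(\<Sum>i\<in>S. \<psi> i t) \<le> D t" using goodrule[OF t gt] rule_sum_le Dnn by blast
      next
        fix i t assume "i \<in> S" "t0 \<le> t"
        then show "integral {t0..t} (\<psi> i) \<le> E i" using goodrule True by fastforce
      next
        show "AE t in lborel. t0 \<le> t \<longrightarrow> ggddf_rates S P (\<lambda>i. E i - integral {t0..t} (\<psi> i)) (D t) (\<lambda>i. \<psi> i t)"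
          using goodrule True by (intro AE_I2) blast
      qed (use psim psib in auto)
    qed
  next
    case False
    then obtain b where b: "t0 \<le> b" "\<not> good b" by auto
    define Pairs where "Pairs = {p \<in> C \<times> C. fst p < snd p}"
    have finP: "finite Pairs" unfolding Pairs_def using finC by auto
    define K where "K = (\<Union>p\<in>Pairs. {t0..b} \<inter> (\<lambda>t. \<Phi> t (snd p) - \<Phi> t (fst p)) -` {..0})"
    have Kclosed: "closed K" unfolding K_def
      using finP by (intro closed_UN ballI continuous_closed_preimage continuous_on_diff Phicont) auto
    have bK: "b \<in> K" using b(2) b(1) unfolding K_def good_def Pairs_def by force
    have Kbdd: "bdd_below K" unfolding K_def by (intro bdd_belowI[of _ t0]) auto
    define t1 where "t1 = Inf K"
    have t1K: "t1 \<in> K" unfolding t1_def using closed_contains_Inf[OF _ Kbdd Kclosed] bK by auto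
    then obtain v1 w1 where vw1: "v1 \<in> C" "w1 \<in> C" "v1 < w1" "\<Phi> t1 w1 \<le> \<Phi> t1 v1" "t0 \<le> t1" "t1 \<le> b"
      unfolding K_def Pairs_def by auto
    have before: "\<And>t. t0 \<le> t \<Longrightarrow> t < t1 \<Longrightarrow> good t"
    proof (rule ccontr)
      fix t assume t: "t0 \<le> t" "t < t1" "\<not> good t"
      then have "t \<in> K" using vw1 unfolding K_def good_def Pairs_def by force
      then have "t1 \<le> t" unfolding t1_def using Kbdd by (rule cInf_lower)
      then show False using t by simp
    qed
    have weak: "\<And>v w. v \<in> C \<Longrightarrow> w \<in> C \<Longrightarrow> v < w \<Longrightarrow> \<Phi> t1 v \<le> \<Phi> t1 w"
    proof (rule ccontr)
      fix v w assume vw: "v \<in> C" "w \<in> C" "v < w" "\<not> \<Phi> t1 v \<le> \<Phi> t1 w"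
      define g where "g t = \<Phi> t v - \<Phi> t w" for t
      have "g t0 \<le> 0" "0 \<le> g t1" using vw Phit0 unfolding g_def by auto
      moreover have "continuous_on {t0..t1} g" unfolding g_def by (intro continuous_on_diff Phicont)
      ultimately obtain z where z: "t0 \<le> z" "z \<le> t1" "g z = 0" using IVT'[of g t0 0 t1] vw1 by auto
      have "z \<noteq> t1" using z vw unfolding g_def by auto
      have "z \<in> K" using z vw vw1 unfolding K_def Pairs_def g_def by force
      then have "t1 \<le> z" unfolding t1_def using Kbdd by (rule cInf_lower)
      then show False using z \<open>z \<noteq> t1\<close> by simp
    qed
    have Phinn1: "\<And>v. v \<in> C \<Longrightarrow> 0 \<le> \<Phi> t1 v"
      using weak[OF zin] Cnn Phi0 by (metis order_le_less)
    define E1 where "E1 i = E i - integral {t0..t1} (\<psi> i)" for i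
    have E1eq: "\<And>i. i \<in> S \<Longrightarrow> E1 i = P i * \<Phi> t1 (E i / P i)" unfolding E1_def using stPhi by blast
    have E1nn: "\<forall>i\<in>S. 0 \<le> E1 i" using E1eq Phinn1 vin Ppos by (metis less_eq_real_def mult_nonneg_nonneg)
    have clsE1: "cls S P E1 = (\<lambda>v. \<Phi> t1 v) ` C"
    proof -
      have "(\<lambda>i. E1 i / P i) ` S = (\<lambda>i. \<Phi> t1 (E i / P i)) ` S"
        using E1eq Ppos by (intro image_cong) auto
      then show ?thesis unfolding cls_def C_def using Phi0 by (simp add: image_Un image_image)
    qed
    have ninj: "\<not> inj_on (\<lambda>v. \<Phi> t1 v) C"
    proof
      assume "inj_on (\<lambda>v. \<Phi> t1 v) C"
      moreover have "\<Phi> t1 v1 = \<Phi> t1 w1" using weak[of v1 w1] vw1 by auto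
      ultimately show False using vw1 by (metis inj_on_contraD less_irrefl)
    qed
    have "card (cls S P E1) < card C"
      unfolding clsE1 using card_image_le[OF finC, of "\<lambda>v. \<Phi> t1 v"] inj_on_iff_eq_card[OF finC] ninj
      by fastforce
    then have "card (cls S P E1) \<le> n" using Suc.prems(1) unfolding C_def by simp
    then obtain \<rho>2 where Q2: "Qp S P D t1 E1 \<rho>2" using Suc.IH E1nn by blast
    have r2m: "\<And>i. i \<in> S \<Longrightarrow> \<rho>2 i \<in> borel_measurable lborel" using Q2 unfolding Qp_def by blast
    have r2b: "\<And>i t. i \<in> S \<Longrightarrow> 0 \<le> \<rho>2 i t \<and> \<rho>2 i t \<le> P i" using Q2 unfolding Qp_def by blast
    define \<rho> where "\<rho> i t = (if t < t1 then \<psi> i t else \<rho>2 i t)" for i t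
    have rm: "\<And>i. i \<in> S \<Longrightarrow> \<rho> i \<in> borel_measurable lborel"
      unfolding \<rho>_def using psim r2m by measurable
    have rb: "\<And>i t. i \<in> S \<Longrightarrow> 0 \<le> \<rho> i t \<and> \<rho> i t \<le> P i" unfolding \<rho>_def using psib r2b by auto
    have rabs: "\<And>i t. i \<in> S \<Longrightarrow> \<bar>\<rho> i t\<bar> \<le> P i" using rb by (simp add: abs_le_iff)
    have Ieq1: "\<And>i t. t \<le> t1 \<Longrightarrow> integral {t0..t} (\<rho> i) = integral {t0..t} (\<psi> i)"
      by (rule integral_spike[of "{t1}"]) (auto simp: \<rho>_def)
    have Ieq2: "\<And>i t. i \<in> S \<Longrightarrow> t1 \<le> t \<Longrightarrow> integral {t0..t} (\<rho> i) = integral {t0..t1} (\<psi> i) + integral {t1..t} (\<rho>2 i)"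
    proof -
      fix i t assume i: "i \<in> S" and t: "t1 \<le> t"
      have "integral {t0..t} (\<rho> i) = integral {t0..t1} (\<rho> i) + integral {t1..t} (\<rho> i)"
        by (rule integral_split[OF rm[OF i] rabs[OF i] vw1(5) t])
      also have "integral {t1..t} (\<rho> i) = integral {t1..t} (\<rho>2 i)"
        by (rule integral_cong) (auto simp: \<rho>_def)
      finally show "integral {t0..t} (\<rho> i) = integral {t0..t1} (\<psi> i) + integral {t1..t} (\<rho>2 i)"
        using Ieq1[of t1 i] by simp
    qed
    have st2: "\<And>i t. i \<in> S \<Longrightarrow> t1 \<le> t \<Longrightarrow> E i - integral {t0..t} (\<rho> i) = E1 i - integral {t1..t} (\<rho>2 i)"
      using Ieq2 unfolding E1_def by simp
    show ?thesis
    proof (intro exI[of _ \<rho>])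
      show "Qp S P D t0 E \<rho>"
        unfolding Qp_def
      proof (intro conjI ballI allI impI)
        fix t assume t: "t0 \<le> t"
        show "(\<Sum>i\<in>S. \<rho> i t) \<le> D t"
        proof (cases "t < t1")
          case True
          then have "(\<Sum>i\<in>S. \<rho> i t) = (\<Sum>i\<in>S. \<psi> i t)" unfolding \<rho>_def by simp
          then show ?thesis using goodrule[OF t before[OF t True]] rule_sum_le Dnn by metis
        next
          case False
          then have "(\<Sum>i\<in>S. \<rho> i t) = (\<Sum>i\<in>S. \<rho>2 i t)" unfolding \<rho>_def by simp
          then show ?thesis using Q2 False unfolding Qp_def by auto
        qed
      next
        fix i t assume i: "i \<in> S" and t: "t0 \<le> t"
        show "integral {t0..t} (\<rho> i) \<le> E i"
        proof (cases "t < t1")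
          case True
          then show ?thesis using Ieq1[of t i] goodrule[OF t before[OF t True]] i by fastforce
        next
          case False
          then have "integral {t1..t} (\<rho>2 i) \<le> E1 i" using Q2 i unfolding Qp_def by auto
          then show ?thesis using st2[OF i, of t] False by linarith
        qed
      next
        have "AE t in lborel. t1 \<le> t \<longrightarrow> ggddf_rates S P (\<lambda>i. E1 i - integral {t1..t} (\<rho>2 i)) (D t) (\<lambda>i. \<rho>2 i t)"
          using Q2 unfolding Qp_def by blast
        then show "AE t in lborel. t0 \<le> t \<longrightarrow> ggddf_rates S P (\<lambda>i. E i - integral {t0..t} (\<rho> i)) (D t) (\<lambda>i. \<rho> i t)"
        proof (rule eventually_mono)
          fix t assume h: "t1 \<le> t \<longrightarrow> ggddf_rates S P (\<lambda>i. E1 i - integral {t1..t} (\<rho>2 i)) (D t) (\<lambda>i. \<rho>2 i t)"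
          show "t0 \<le> t \<longrightarrow> ggddf_rates S P (\<lambda>i. E i - integral {t0..t} (\<rho> i)) (D t) (\<lambda>i. \<rho> i t)"
          proof
            assume t: "t0 \<le> t"
            show "ggddf_rates S P (\<lambda>i. E i - integral {t0..t} (\<rho> i)) (D t) (\<lambda>i. \<rho> i t)"
            proof (cases "t < t1")
              case True
              have "ggddf_rates S P (\<lambda>i. E i - integral {t0..t} (\<psi> i)) (D t) (\<lambda>i. \<psi> i t)"
                using goodrule[OF t before[OF t True]] by blast
              moreover have "\<forall>i\<in>S. E i - integral {t0..t} (\<rho> i) = E i - integral {t0..t} (\<psi> i)"
                using Ieq1 True by simp
              moreover have "\<forall>i\<in>S. \<rho> i t = \<psi> i t" using True unfolding \<rho>_def by simp
              ultimately show ?thesis using ggddf_rates_cong[of S "\<lambda>i. E i - integral {t0..t} (\<rho> i)" "\<lambda>i. E i - integral {t0..t} (\<psi> i)" "\<lambda>i. \<rho> i t" "\<lambda>i. \<psi> i t" P "D t"] by simp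
            next
              case False
              have "ggddf_rates S P (\<lambda>i. E1 i - integral {t1..t} (\<rho>2 i)) (D t) (\<lambda>i. \<rho>2 i t)"
                using h False by simp
              moreover have "\<forall>i\<in>S. E i - integral {t0..t} (\<rho> i) = E1 i - integral {t1..t} (\<rho>2 i)"
                using st2 False by simp
              moreover have "\<forall>i\<in>S. \<rho> i t = \<rho>2 i t" using False unfolding \<rho>_def by simp
              ultimately show ?thesis using ggddf_rates_cong[of S "\<lambda>i. E i - integral {t0..t} (\<rho> i)" "\<lambda>i. E1 i - integral {t1..t} (\<rho>2 i)" "\<lambda>i. \<rho> i t" "\<lambda>i. \<rho>2 i t" P "D t"] by simp
            qed
          qed
        qed
      qed (use rm rb in auto)
    qed
  qed
qed

end


lemma sb_set_integrable:
  fixes f :: "real \<Rightarrow> real"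
  assumes "f \<in> borel_measurable lborel" "\<And>t. t \<in> {a..b} \<Longrightarrow> \<bar>f t\<bar> \<le> C"
  shows "set_integrable lborel {a..b} f"
  unfolding set_integrable_def
  by (rule integrableI_bounded_set_indicator[where B=C]) (use assms in \<open>auto simp: emeasure_lborel_Icc_eq\<close>)

lemma sb_integrable_on:
  fixes f :: "real \<Rightarrow> real"
  assumes "f \<in> borel_measurable lborel" "\<And>t. t \<in> {a..b} \<Longrightarrow> \<bar>f t\<bar> \<le> C"
  shows "f integrable_on {a..b}"
  using set_borel_integral_eq_integral(1)[OF sb_set_integrable[OF assms]] .

lemma sb_LINT_eq:
  fixes f :: "real \<Rightarrow> real"
  assumes "f \<in> borel_measurable lborel" "\<And>t. t \<in> {a..b} \<Longrightarrow> \<bar>f t\<bar> \<le> C"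
  shows "(LINT x:{a..b}|lborel. f x) = integral {a..b} f"
  using set_borel_integral_eq_integral(2)[OF sb_set_integrable[OF assms]] .

lemma nn_Icc:
  fixes f :: "real \<Rightarrow> real"
  assumes "f \<in> borel_measurable lborel" "\<And>t. t \<in> {a..b} \<Longrightarrow> 0 \<le> f t \<and> f t \<le> C"
  shows "(\<integral>\<^sup>+t. indicator {a..b} t * ennreal (f t) \<partial>lborel) = ennreal (integral {a..b} f)"
proof -
  have "f integrable_on {a..b}" using assms by (intro sb_integrable_on[where C=C]) auto
  then have "(f has_integral integral {a..b} f) {a..b}" by (rule integrable_integral)
  then have "(\<integral>\<^sup>+t. ennreal (f t) * indicator {a..b} t \<partial>lborel) = ennreal (integral {a..b} f)"
    using assms(2) by (intro nn_integral_has_integral_lebesgue') auto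
  then show ?thesis by (simp add: mult.commute)
qed

lemma half_line_le:
  fixes g :: "real \<Rightarrow> ennreal"
  assumes gm: "g \<in> borel_measurable lborel"
    and le: "\<And>M. 0 \<le> M \<Longrightarrow> (\<integral>\<^sup>+t. indicator {0..M} t * g t \<partial>lborel) \<le> C"
  shows "(\<integral>\<^sup>+t. indicator {0..} t * g t \<partial>lborel) \<le> C"
proof -
  define f where "f n t = indicator {0..real n} t * g t" for n :: nat and t
  have inc: "incseq f"
    unfolding f_def by (intro monoI le_funI mult_right_mono) (auto split: split_indicator)
  have fm: "\<And>n. f n \<in> borel_measurable lborel" unfolding f_def using gm by measurable
  have sup: "(SUP n. f n t) = indicator {0..} t * g t" for t
  proof (cases "0 \<le> t")
    case False
    then show ?thesis unfolding f_def by simp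
  next
    case True
    obtain N :: nat where N: "t \<le> real N" using real_arch_simple by blast
    show ?thesis
    proof (rule antisym)
      show "(SUP n. f n t) \<le> indicator {0..} t * g t"
        using True by (intro SUP_least) (auto simp: f_def split: split_indicator)
      have "indicator {0..} t * g t = f N t" using True N unfolding f_def by simp
      then show "indicator {0..} t * g t \<le> (SUP n. f n t)" by (metis SUP_upper UNIV_I)
    qed
  qed
  have "(\<integral>\<^sup>+t. indicator {0..} t * g t \<partial>lborel) = (\<integral>\<^sup>+t. (SUP n. f n t) \<partial>lborel)"
    using sup by simp
  also have "\<dots> = (SUP n. integral\<^sup>N lborel (f n))"
    by (rule nn_integral_monotone_convergence_SUP[OF inc fm])
  also have "\<dots> \<le> C" unfolding f_def by (intro SUP_least le) auto
  finally show ?thesis .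
qed

lemma mono_pos:
  fixes H h :: "real \<Rightarrow> real"
  assumes cont: "continuous_on {a..b} H"
    and eq: "\<And>c t. a \<le> c \<Longrightarrow> c \<le> t \<Longrightarrow> t \<le> b \<Longrightarrow> H t = H c - integral {c..t} h"
    and hm: "h \<in> borel_measurable lborel" and hb: "\<And>t. t \<in> {a..b} \<Longrightarrow> \<bar>h t\<bar> \<le> C"
    and ae: "AE s in lborel. a \<le> s \<longrightarrow> s \<le> b \<longrightarrow> 0 < H s \<longrightarrow> 0 \<le> h s"
    and Ha: "H a \<le> 0" and ab: "a \<le> b"
  shows "H b \<le> 0"
proof (rule ccontr)
  assume Hb: "\<not> H b \<le> 0"
  define Z where "Z = {a..b} \<inter> H -` {..0}"
  have Zc: "closed Z" unfolding Z_def by (rule continuous_closed_preimage[OF cont]) auto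
  have aZ: "a \<in> Z" unfolding Z_def using Ha ab by auto
  have Zb: "bdd_above Z" unfolding Z_def by (intro bdd_aboveI[of _ b]) auto
  define c where "c = Sup Z"
  have cZ: "c \<in> Z" unfolding c_def using closed_contains_Sup[OF _ Zb Zc] aZ by auto
  then have c: "a \<le> c" "c \<le> b" "H c \<le> 0" unfolding Z_def by auto
  have after: "\<And>t. c < t \<Longrightarrow> t \<le> b \<Longrightarrow> 0 < H t"
  proof (rule ccontr)
    fix t assume t: "c < t" "t \<le> b" "\<not> 0 < H t"
    then have "t \<in> Z" unfolding Z_def using c by auto
    then have "t \<le> c" unfolding c_def using Zb by (rule cSup_upper)
    then show False using t by simp
  qed
  have "0 \<le> integral {c..b} h"
  proof -
    have "integral {c..b} h = (LINT x:{c..b}|lborel. h x)"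
      using c by (intro sb_LINT_eq[symmetric, OF hm, of _ _ C] hb) auto
    also have "\<dots> = integral\<^sup>L lborel (\<lambda>x. indicator {c..b} x *\<^sub>R h x)"
      unfolding set_lebesgue_integral_def ..
    also have "0 \<le> \<dots>"
    proof (rule integral_nonneg_AE)
      show "AE x in lborel. 0 \<le> indicator {c..b} x *\<^sub>R h x"
        using ae AE_lborel_singleton[of c]
      proof eventually_elim
        case (elim x)
        then show ?case using after[of x] c by (auto simp: indicator_def)
      qed
    qed
    finally show ?thesis .
  qed
  then have "H b \<le> H c" using eq[of c b] c by simp
  then show False using Hb c by simp
qed


lemma burst_eq:
  assumes "finite S"
  shows "burst_power S P E u = (\<Sum>i\<in>S. P i * indicator {..E i / P i} u)"
  unfolding burst_power_def using assms
  by (simp add: sum.inter_filter[symmetric] indicator_def of_bool_def if_distrib[of "\<lambda>x. P _ * x"] sum.If_cases Int_def)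

lemma burst_meas:
  assumes "finite S"
  shows "burst_power S P E \<in> borel_measurable lborel"
  unfolding burst_eq[OF assms, abs_def] by measurable

lemma ES_lemma:
  assumes fin: "finite S" and Ppos: "\<forall>i\<in>S. P i > 0" and Enn: "\<forall>i\<in>S. 0 \<le> E i"
    and L: "0 \<le> L" and p: "0 \<le> p"
  shows "(\<Sum>i\<in>S. ennreal (min (E i) (P i * L))) \<le> ep_stores S P E p + ennreal (p * L)"
proof -
  define s where "s = burst_power S P E"
  have sm: "s \<in> borel_measurable lborel" unfolding s_def by (rule burst_meas[OF fin])
  have "(\<integral>\<^sup>+u. indicator {0..L} u * ennreal (s u) \<partial>lborel)
      = (\<integral>\<^sup>+u. (\<Sum>i\<in>S. ennreal (P i) * indicator ({0..L} \<inter> {..E i / P i}) u) \<partial>lborel)"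
  proof (intro nn_integral_cong)
    fix u :: real
    have "indicator {0..L} u * ennreal (s u) = indicator {0..L} u * (\<Sum>i\<in>S. ennreal (P i * indicator {..E i / P i} u))"
      unfolding s_def burst_eq[OF fin] using Ppos by (subst sum_ennreal) (auto intro!: mult_nonneg_nonneg)
    also have "\<dots> = (\<Sum>i\<in>S. ennreal (P i) * indicator ({0..L} \<inter> {..E i / P i}) u)"
      unfolding sum_distrib_left using Ppos
      by (intro sum.cong refl) (auto simp: indicator_def ennreal_mult)
    finally show "indicator {0..L} u * ennreal (s u) = (\<Sum>i\<in>S. ennreal (P i) * indicator ({0..L} \<inter> {..E i / P i}) u)" .
  qed
  also have "\<dots> = (\<Sum>i\<in>S. ennreal (P i) * emeasure lborel ({0..L} \<inter> {..E i / P i}))"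
    by (subst nn_integral_sum) (auto simp: nn_integral_cmult_indicator)
  also have "\<dots> = (\<Sum>i\<in>S. ennreal (min (E i) (P i * L)))"
  proof (intro sum.cong refl)
    fix i assume i: "i \<in> S"
    have pi: "0 < P i" using Ppos i by auto
    have tau: "0 \<le> E i / P i" using Enn i pi by auto
    have "{0..L} \<inter> {..E i / P i} = {0..min L (E i / P i)}" by auto
    then have "emeasure lborel ({0..L} \<inter> {..E i / P i}) = ennreal (min L (E i / P i))"
      using L tau by simp
    moreover have "P i * min L (E i / P i) = min (E i) (P i * L)"
      using pi by (simp add: min_def field_simps)
    ultimately show "ennreal (P i) * emeasure lborel ({0..L} \<inter> {..E i / P i}) = ennreal (min (E i) (P i * L))"
      using pi tau L by (metis ennreal_mult less_imp_le min.boundedI)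
  qed
  finally have eq1: "(\<Sum>i\<in>S. ennreal (min (E i) (P i * L))) = (\<integral>\<^sup>+u. indicator {0..L} u * ennreal (s u) \<partial>lborel)" ..
  also have "\<dots> \<le> (\<integral>\<^sup>+u. indicator {0..L} u * ennreal (max 0 (s u - p)) + ennreal p * indicator {0..L} u \<partial>lborel)"
  proof (intro nn_integral_mono)
    fix u
    have "ennreal (s u) \<le> ennreal (max 0 (s u - p) + p)" by (intro ennreal_leI) auto
    also have "\<dots> = ennreal (max 0 (s u - p)) + ennreal p" using p by (intro ennreal_plus) auto
    finally show "indicator {0..L} u * ennreal (s u) \<le> indicator {0..L} u * ennreal (max 0 (s u - p)) + ennreal p * indicator {0..L} u"
      by (auto simp: indicator_def)
  qed
  also have "\<dots> = (\<integral>\<^sup>+u. indicator {0..L} u * ennreal (max 0 (s u - p)) \<partial>lborel) + ennreal p * emeasure lborel {0..L}"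
    using sm by (subst nn_integral_add) (auto simp: nn_integral_cmult_indicator)
  also have "\<dots> \<le> ep_stores S P E p + ennreal (p * L)"
  proof (intro add_mono)
    show "(\<integral>\<^sup>+u. indicator {0..L} u * ennreal (max 0 (s u - p)) \<partial>lborel) \<le> ep_stores S P E p"
      unfolding ep_stores_def s_def by (intro nn_integral_mono) (auto simp: indicator_def)
    show "ennreal p * emeasure lborel {0..L} \<le> ennreal (p * L)" using L p by (simp add: ennreal_mult)
  qed
  finally show ?thesis .
qed


lemma le_ennreal_min: "(X::ennreal) \<le> ennreal x \<Longrightarrow> X \<le> ennreal y \<Longrightarrow> X \<le> ennreal (min x y)"
  by (cases "x \<le> y") (auto simp: min_def)

context
  fixes S :: "'i set" and Ebar P E0 :: "'i \<Rightarrow> real" and d :: "real \<Rightarrow> real"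
  assumes fin: "finite S" and Ppos: "\<forall>i\<in>S. P i > 0" and E0nn: "\<forall>i\<in>S. 0 \<le> E0 i"
    and dint: "\<forall>a\<ge>0. set_integrable lborel {0..a} d" and dnn: "\<forall>t\<ge>0. d t \<ge> 0"
begin

lemma pol_basic:
  assumes pol: "is_policy S Ebar P E0 d r" and i: "i \<in> S" and t: "0 \<le> t"
  shows "stored_energy E0 r i t = E0 i - integral {0..t} (r i)"
    and "r i integrable_on {0..t}" and "integral {0..t} (r i) \<le> E0 i" and "0 \<le> integral {0..t} (r i)"
proof -
  have m: "r i \<in> borel_measurable lborel" using pol i unfolding is_policy_def by auto
  have b: "\<And>s. s \<in> {0..t} \<Longrightarrow> \<bar>r i s\<bar> \<le> P i" using pol i unfolding is_policy_def by auto
  show eq: "stored_energy E0 r i t = E0 i - integral {0..t} (r i)"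
    unfolding stored_energy_def using sb_LINT_eq[OF m b] by simp
  show io: "r i integrable_on {0..t}" using sb_integrable_on[OF m b] .
  show "integral {0..t} (r i) \<le> E0 i" using pol i t eq unfolding is_policy_def by force
  show "0 \<le> integral {0..t} (r i)" using io pol i by (intro integral_nonneg) (auto simp: is_policy_def)
qed

lemma pol_meas:
  assumes pol: "is_policy S Ebar P E0 d r"
  shows "(\<lambda>t. \<Sum>i\<in>S. r i t) \<in> borel_measurable lborel"
  using pol unfolding is_policy_def by (intro borel_measurable_sum) auto

lemma PS:
  assumes pol: "is_policy S Ebar P E0 d r" and p: "0 \<le> p" and M: "0 \<le> M"
  shows "(\<integral>\<^sup>+t. indicator {0..M} t * ennreal (max 0 ((\<Sum>i\<in>S. r i t) - p)) \<partial>lborel) \<le> ep_stores S P E0 p"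
proof -
  define R where "R t = (\<Sum>i\<in>S. r i t)" for t
  have Rm: "R \<in> borel_measurable lborel" unfolding R_def using pol_meas[OF pol] by simp
  have rm: "\<And>i. i \<in> S \<Longrightarrow> r i \<in> borel_measurable lborel" using pol unfolding is_policy_def by auto
  have rnn: "\<And>i t. i \<in> S \<Longrightarrow> 0 \<le> t \<Longrightarrow> 0 \<le> r i t \<and> r i t \<le> P i" using pol unfolding is_policy_def by auto
  define A where "A = {t\<in>{0..M}. p < R t}"
  have Am: "A \<in> sets lborel" unfolding A_def using Rm by measurable
  have "emeasure lborel A \<le> emeasure lborel {0..M}" unfolding A_def by (intro emeasure_mono) auto
  then have Afin: "emeasure lborel A \<noteq> \<infinity>" using M by (auto simp: top_unique)
  define L where "L = measure lborel A"
  have AL: "emeasure lborel A = ennreal L" unfolding L_def using Afin by (simp add: emeasure_eq_ennreal_measure)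
  have L0: "0 \<le> L" unfolding L_def by simp
  have step1: "(\<integral>\<^sup>+t. indicator {0..M} t * ennreal (max 0 (R t - p)) \<partial>lborel)
      = (\<integral>\<^sup>+t. indicator A t * ennreal (R t - p) \<partial>lborel)"
    by (intro nn_integral_cong) (auto simp: A_def indicator_def max_def)
  have step2: "(\<integral>\<^sup>+t. indicator A t * ennreal (R t) \<partial>lborel)
      = (\<integral>\<^sup>+t. indicator A t * ennreal (R t - p) \<partial>lborel) + ennreal (p * L)"
  proof -
    have "(\<integral>\<^sup>+t. indicator A t * ennreal (R t) \<partial>lborel)
        = (\<integral>\<^sup>+t. indicator A t * ennreal (R t - p) + ennreal p * indicator A t \<partial>lborel)"
      using p by (intro nn_integral_cong) (auto simp: A_def indicator_def ennreal_plus[symmetric])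
    also have "\<dots> = (\<integral>\<^sup>+t. indicator A t * ennreal (R t - p) \<partial>lborel) + ennreal p * emeasure lborel A"
      using Rm Am by (subst nn_integral_add) (auto simp: nn_integral_cmult_indicator)
    finally show ?thesis using AL p L0 by (simp add: ennreal_mult)
  qed
  have step3: "(\<integral>\<^sup>+t. indicator A t * ennreal (R t) \<partial>lborel)
      = (\<Sum>i\<in>S. \<integral>\<^sup>+t. indicator A t * ennreal (r i t) \<partial>lborel)"
  proof -
    have "(\<integral>\<^sup>+t. indicator A t * ennreal (R t) \<partial>lborel) = (\<integral>\<^sup>+t. (\<Sum>i\<in>S. indicator A t * ennreal (r i t)) \<partial>lborel)"
    proof (intro nn_integral_cong)
      fix t
      show "indicator A t * ennreal (R t) = (\<Sum>i\<in>S. indicator A t * ennreal (r i t))"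
      proof (cases "t \<in> A")
        case True
        then have "0 \<le> t" unfolding A_def by auto
        then show ?thesis using True rnn unfolding R_def by (subst sum_ennreal[symmetric]) auto
      qed simp
    qed
    also have "\<dots> = (\<Sum>i\<in>S. \<integral>\<^sup>+t. indicator A t * ennreal (r i t) \<partial>lborel)"
      using rm Am by (intro nn_integral_sum) auto
    finally show ?thesis .
  qed
  have step4: "\<And>i. i \<in> S \<Longrightarrow> (\<integral>\<^sup>+t. indicator A t * ennreal (r i t) \<partial>lborel) \<le> ennreal (min (E0 i) (P i * L))"
  proof (rule le_ennreal_min)
    fix i assume i: "i \<in> S"
    have "(\<integral>\<^sup>+t. indicator A t * ennreal (r i t) \<partial>lborel) \<le> (\<integral>\<^sup>+t. indicator {0..M} t * ennreal (r i t) \<partial>lborel)"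
      by (intro nn_integral_mono) (auto simp: A_def indicator_def)
    also have "\<dots> = ennreal (integral {0..M} (r i))"
      using rnn[OF i] by (intro nn_Icc[OF rm[OF i], of _ _ "P i"]) auto
    also have "\<dots> \<le> ennreal (E0 i)" using pol_basic(3)[OF pol i M] by (rule ennreal_leI)
    finally show "(\<integral>\<^sup>+t. indicator A t * ennreal (r i t) \<partial>lborel) \<le> ennreal (E0 i)" .
    have "(\<integral>\<^sup>+t. indicator A t * ennreal (r i t) \<partial>lborel) \<le> (\<integral>\<^sup>+t. ennreal (P i) * indicator A t \<partial>lborel)"
    proof (intro nn_integral_mono)
      fix t
      show "indicator A t * ennreal (r i t) \<le> ennreal (P i) * indicator A t"
      proof (cases "t \<in> A")
        case True
        then have "0 \<le> t" unfolding A_def by auto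
        then have "ennreal (r i t) \<le> ennreal (P i)" using rnn[OF i] by (intro ennreal_leI) auto
        then show ?thesis using True by simp
      qed simp
    qed
    also have "\<dots> = ennreal (P i) * ennreal L" using nn_integral_cmult_indicator[OF Am] AL by simp
    also have "\<dots> = ennreal (P i * L)" by (rule ennreal_mult[symmetric]) (use Ppos i L0 in auto)
    finally show "(\<integral>\<^sup>+t. indicator A t * ennreal (r i t) \<partial>lborel) \<le> ennreal (P i * L)" .
  qed
  have "(\<integral>\<^sup>+t. indicator A t * ennreal (R t - p) \<partial>lborel) + ennreal (p * L)
      \<le> ep_stores S P E0 p + ennreal (p * L)"
    unfolding step2[symmetric] step3
    using sum_mono[OF step4, of S] ES_lemma[OF fin Ppos E0nn L0 p] by (rule order_trans)
  then have "(\<integral>\<^sup>+t. indicator A t * ennreal (R t - p) \<partial>lborel) \<le> ep_stores S P E0 p"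
    by (subst (asm) add.commute, subst (asm) (2) add.commute) (simp add: ennreal_add_left_cancel_le)
  then show ?thesis using step1 unfolding R_def by simp
qed

lemma PS_inf:
  assumes pol: "is_policy S Ebar P E0 d r" and p: "0 \<le> p"
  shows "(\<integral>\<^sup>+t. indicator {0..} t * ennreal (max 0 ((\<Sum>i\<in>S. r i t) - p)) \<partial>lborel) \<le> ep_stores S P E0 p"
  using pol_meas[OF pol] by (intro half_line_le PS[OF pol p]) auto

end


lemma ereal_sub_le:
  fixes a b c :: ennreal
  assumes "a \<le> b + c" "c \<noteq> top"
  shows "enn2ereal a - enn2ereal c \<le> enn2ereal b"
proof -
  obtain x where x: "0 \<le> x" "c = ennreal x" using assms(2) by (cases c) auto
  have "enn2ereal a \<le> enn2ereal b + ereal x" using assms(1) x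
    by (metis enn2ereal_ennreal less_eq_ennreal.rep_eq plus_ennreal.rep_eq)
  then show ?thesis using x by (simp add: ereal_minus_le_iff)
qed
lemma ereal_sub_eq:
  fixes a b c :: ennreal
  assumes "b + c = a" "c \<noteq> top"
  shows "enn2ereal b = enn2ereal a - enn2ereal c"
proof -
  obtain x where x: "0 \<le> x" "c = ennreal x" using assms(2) by (cases c) auto
  have "enn2ereal a = enn2ereal b + ereal x" using assms(1) x
    by (metis enn2ereal_ennreal plus_ennreal.rep_eq)
  then show ?thesis using x by (cases "enn2ereal b") auto
qed

lemma rule_order:
  assumes rule: "ggddf_rates S P E x \<rho>" and Ppos: "\<forall>k\<in>S. P k > 0"
    and i: "i \<in> S" and j: "j \<in> S" and lt: "E j / P j < E i / P i" and Ej: "0 \<le> E j"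
    and rj: "\<rho> j \<le> P j" and ri: "0 \<le> \<rho> i"
  shows "\<rho> j / P j \<le> \<rho> i / P i"
proof -
  have pi: "0 < P i" and pj: "0 < P j" using Ppos i j by auto
  have "0 \<le> E j / P j" using Ej pj by auto
  then have Ei: "0 < E i" using lt pi by (smt (verit) divide_nonpos_pos)
  have ri': "0 \<le> \<rho> i / P i" using ri pi by auto
  have rj1: "\<rho> j / P j \<le> 1" using rj pj by auto
  define db where "db = min x (\<Sum>i\<in>{i\<in>S. E i > 0}. P i)"
  show ?thesis
  proof (cases "db = 0")
    case True
    then have "\<forall>k\<in>S. \<rho> k = 0" using rule unfolding ggddf_rates_def Let_def db_def by auto
    then show ?thesis using i j by simp
  next
    case False
    then obtain \<theta> lam where f: "\<forall>k\<in>S. \<rho> k = (if E k > 0 \<and> E k / P k > \<theta> then P k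
                                   else if E k > 0 \<and> E k / P k = \<theta> then lam * P k else 0)"
      and lam: "lam \<le> 1"
      using rule unfolding ggddf_rates_def Let_def db_def by auto
    show ?thesis
    proof (cases "\<rho> j = 0")
      case True then show ?thesis using ri' by simp
    next
      case False
      then have "E j > 0 \<and> \<theta> \<le> E j / P j" using f j by (auto split: if_splits)
      then have "\<rho> i = P i" using f i Ei lt by auto
      then show ?thesis using rj1 pi by simp
    qed
  qed
qed

lemma rule_char:
  assumes rule: "ggddf_rates S P E x \<rho>" and fin: "finite S" and Ppos: "\<forall>k\<in>S. P k > 0"
    and NS: "N \<subseteq> S" and Npos: "\<forall>i\<in>N. 0 < E i"
    and ord: "\<forall>i\<in>N. \<forall>j\<in>S - N. E j / P j < E i / P i"
    and Enn: "\<forall>j\<in>S. 0 \<le> E j" and rb: "\<forall>k\<in>S. 0 \<le> \<rho> k \<and> \<rho> k \<le> P k" and x: "0 \<le> x"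
  shows "(\<Sum>j\<in>S - N. \<rho> j) = max 0 ((\<Sum>k\<in>S. \<rho> k) - (\<Sum>i\<in>N. P i))"
    and "min x (\<Sum>i\<in>N. P i) \<le> (\<Sum>k\<in>S. \<rho> k)"
proof -
  define db where "db = min x (\<Sum>i\<in>{i\<in>S. E i > 0}. P i)"
  have split: "(\<Sum>k\<in>S. \<rho> k) = (\<Sum>j\<in>S - N. \<rho> j) + (\<Sum>i\<in>N. \<rho> i)"
    using fin NS by (simp add: sum.subset_diff)
  have Nle: "(\<Sum>i\<in>N. \<rho> i) \<le> (\<Sum>i\<in>N. P i)" using rb NS by (intro sum_mono) auto
  have restnn: "0 \<le> (\<Sum>j\<in>S - N. \<rho> j)" using rb by (intro sum_nonneg) auto
  have pstar: "(\<Sum>i\<in>N. P i) \<le> (\<Sum>i\<in>{i\<in>S. E i > 0}. P i)"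
    using NS Npos Ppos fin by (intro sum_mono2) auto
  show "min x (\<Sum>i\<in>N. P i) \<le> (\<Sum>k\<in>S. \<rho> k)"
  proof (cases "db = 0")
    case True
    then have "\<forall>k\<in>S. \<rho> k = 0" using rule unfolding ggddf_rates_def Let_def db_def by auto
    moreover have "min x (\<Sum>i\<in>N. P i) \<le> db" unfolding db_def using pstar by linarith
    ultimately show ?thesis using True by simp
  next
    case False
    then have "(\<Sum>k\<in>S. \<rho> k) = db" using rule unfolding ggddf_rates_def Let_def db_def by auto
    then show ?thesis unfolding db_def using pstar by linarith
  qed
  show "(\<Sum>j\<in>S - N. \<rho> j) = max 0 ((\<Sum>k\<in>S. \<rho> k) - (\<Sum>i\<in>N. P i))"
  proof (cases "\<exists>j\<in>S - N. \<rho> j \<noteq> 0")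
    case False
    then have "(\<Sum>j\<in>S - N. \<rho> j) = 0" by simp
    then show ?thesis using split Nle by simp
  next
    case True
    then obtain j where j: "j \<in> S - N" "\<rho> j \<noteq> 0" by auto
    have "db \<noteq> 0"
    proof
      assume "db = 0"
      then have "\<forall>k\<in>S. \<rho> k = 0" using rule unfolding ggddf_rates_def Let_def db_def by auto
      then show False using j by auto
    qed
    then obtain \<theta> lam where f: "\<forall>k\<in>S. \<rho> k = (if E k > 0 \<and> E k / P k > \<theta> then P k
                                   else if E k > 0 \<and> E k / P k = \<theta> then lam * P k else 0)"
      using rule unfolding ggddf_rates_def Let_def db_def by auto
    have jt: "E j > 0 \<and> \<theta> \<le> E j / P j" using f j by (auto split: if_splits)
    have "\<forall>i\<in>N. \<rho> i = P i"
    proof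
      fix i assume i: "i \<in> N"
      have "E j / P j < E i / P i" using ord i j(1) by blast
      then have "\<theta> < E i / P i" using jt by linarith
      then show "\<rho> i = P i" using f i NS Npos by auto
    qed
    then have "(\<Sum>i\<in>N. \<rho> i) = (\<Sum>i\<in>N. P i)" by simp
    then show ?thesis using split restnn by simp
  qed
qed


context
  fixes S :: "'i set" and Ebar P E0 :: "'i \<Rightarrow> real" and d :: "real \<Rightarrow> real" and T :: ereal
  assumes fin: "finite S" and Ppos: "\<forall>i\<in>S. P i > 0" and E0nn: "\<forall>i\<in>S. 0 \<le> E0 i"
    and dint: "\<forall>a\<ge>0. set_integrable lborel {0..a} d" and dnn: "\<forall>t\<ge>0. d t \<ge> 0"
begin

lemma Tset_meas: "{t::real. 0 \<le> t \<and> ereal t \<le> T} \<in> sets lborel"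
proof (cases T)
  case (real x)
  then have "{t::real. 0 \<le> t \<and> ereal t \<le> T} = {0..x}" by auto
  then show ?thesis by simp
next
  case PInf
  then have "{t::real. 0 \<le> t \<and> ereal t \<le> T} = {0..}" by auto
  then show ?thesis by simp
next
  case MInf
  then have "{t::real. 0 \<le> t \<and> ereal t \<le> T} = {}" by auto
  then show ?thesis by simp
qed

lemma ES_fin:
  assumes p: "0 \<le> p"
  shows "ep_stores S P E0 p \<noteq> \<infinity>"
proof -
  have "ep_stores S P E0 p \<le> (\<integral>\<^sup>+u. (\<Sum>i\<in>S. ennreal (P i) * indicator {0..E0 i / P i} u) \<partial>lborel)"
    unfolding ep_stores_def
  proof (intro nn_integral_mono)
    fix u :: real
    show "indicator {0..} u * ennreal (max 0 (burst_power S P E0 u - p)) \<le> (\<Sum>i\<in>S. ennreal (P i) * indicator {0..E0 i / P i} u)"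
    proof (cases "0 \<le> u")
      case False
      then show ?thesis by simp
    next
      case True
      have bnn: "0 \<le> burst_power S P E0 u" unfolding burst_power_def using Ppos by (intro sum_nonneg) auto
      have "ennreal (max 0 (burst_power S P E0 u - p)) \<le> ennreal (burst_power S P E0 u)"
        using p bnn by (intro ennreal_leI) auto
      also have "\<dots> = (\<Sum>i\<in>S. ennreal (P i * indicator {..E0 i / P i} u))"
        unfolding burst_eq[OF fin] using Ppos by (subst sum_ennreal) (auto intro!: mult_nonneg_nonneg)
      also have "\<dots> = (\<Sum>i\<in>S. ennreal (P i) * indicator {0..E0 i / P i} u)"
        using True by (intro sum.cong refl) (auto simp: indicator_def)
      finally show ?thesis using True by simp
    qed
  qed
  also have "\<dots> = (\<Sum>i\<in>S. ennreal (P i) * emeasure lborel {0..E0 i / P i})"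
    by (subst nn_integral_sum) (auto simp: nn_integral_cmult_indicator)
  also have "\<dots> = (\<Sum>i\<in>S. ennreal (P i * (E0 i / P i)))"
  proof (intro sum.cong refl)
    fix i assume i: "i \<in> S"
    have "0 \<le> E0 i / P i" "0 \<le> P i" using E0nn Ppos i by auto
    then have "ennreal (P i) * ennreal (E0 i / P i) = ennreal (P i * (E0 i / P i))"
      by (simp only: ennreal_mult)
    then show "ennreal (P i) * emeasure lborel {0..E0 i / P i} = ennreal (P i * (E0 i / P i))"
      using \<open>0 \<le> E0 i / P i\<close> by (simp only: emeasure_lborel_Icc diff_zero)
  qed
  also have "\<dots> = ennreal (\<Sum>i\<in>S. P i * (E0 i / P i))"
    using E0nn Ppos by (intro sum_ennreal) auto
  finally have "ep_stores S P E0 p \<le> ennreal (\<Sum>i\<in>S. P i * (E0 i / P i))" .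
  then show ?thesis unfolding infinity_ennreal_def using neq_top_trans[OF ennreal_neq_top] by blast
qed

end

context
  fixes S :: "'i set" and Ebar P E0 :: "'i \<Rightarrow> real" and d :: "real \<Rightarrow> real" and T :: ereal
  assumes fin: "finite S" and Ppos: "\<forall>i\<in>S. P i > 0" and E0nn: "\<forall>i\<in>S. 0 \<le> E0 i"
    and dint: "\<forall>a\<ge>0. set_integrable lborel {0..a} d" and dnn: "\<forall>t\<ge>0. d t \<ge> 0"
begin

lemma LB:
  assumes pol: "is_policy S Ebar P E0 d r" and p: "0 \<le> p"
  shows "ep_demand d 0 T p \<le> unserved S d r T + ep_stores S P E0 p"
proof -
  define D where "D t = (if 0 \<le> t then d t else 0)" for t
  have Dm: "D \<in> borel_measurable lborel" unfolding D_def using D_meas[OF dint] .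
  define R where "R t = (\<Sum>i\<in>S. r i t)" for t
  have Rm: "R \<in> borel_measurable lborel" unfolding R_def using pol_meas[OF fin Ppos E0nn dint dnn pol] by simp
  define Ts where "Ts = {t::real. 0 \<le> t \<and> ereal t \<le> T}"
  have Tsm: "Ts \<in> sets lborel" unfolding Ts_def by (rule Tset_meas[OF fin Ppos E0nn dint dnn])
  have "ep_demand d 0 T p = (\<integral>\<^sup>+u. indicator Ts u * ennreal (max 0 (D u - p)) \<partial>lborel)"
    unfolding ep_demand_def Ts_def D_def by (intro nn_integral_cong) (auto simp: indicator_def)
  also have "\<dots> \<le> (\<integral>\<^sup>+u. indicator Ts u * ennreal (max (D u - R u) 0) + indicator Ts u * ennreal (max 0 (R u - p)) \<partial>lborel)"
  proof (intro nn_integral_mono)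
    fix u
    have "ennreal (max 0 (D u - p)) \<le> ennreal (max (D u - R u) 0 + max 0 (R u - p))"
      by (intro ennreal_leI) auto
    also have "\<dots> = ennreal (max (D u - R u) 0) + ennreal (max 0 (R u - p))" by (intro ennreal_plus) auto
    finally show "indicator Ts u * ennreal (max 0 (D u - p)) \<le> indicator Ts u * ennreal (max (D u - R u) 0) + indicator Ts u * ennreal (max 0 (R u - p))"
      by (auto simp: indicator_def)
  qed
  also have "\<dots> = (\<integral>\<^sup>+u. indicator Ts u * ennreal (max (D u - R u) 0) \<partial>lborel) + (\<integral>\<^sup>+u. indicator Ts u * ennreal (max 0 (R u - p)) \<partial>lborel)"
    using Tsm Dm Rm by (intro nn_integral_add) auto
  also have "\<dots> \<le> unserved S d r T + ep_stores S P E0 p"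
  proof (intro add_mono)
    show "(\<integral>\<^sup>+u. indicator Ts u * ennreal (max (D u - R u) 0) \<partial>lborel) \<le> unserved S d r T"
      unfolding unserved_def Ts_def D_def R_def by (intro nn_integral_mono) (auto simp: indicator_def)
    have "(\<integral>\<^sup>+u. indicator Ts u * ennreal (max 0 (R u - p)) \<partial>lborel) \<le> (\<integral>\<^sup>+u. indicator {0..} u * ennreal (max 0 (R u - p)) \<partial>lborel)"
      unfolding Ts_def by (intro nn_integral_mono) (auto simp: indicator_def)
    also have "\<dots> \<le> ep_stores S P E0 p" unfolding R_def by (rule PS_inf[OF fin Ppos E0nn dint dnn pol p])
    finally show "(\<integral>\<^sup>+u. indicator Ts u * ennreal (max 0 (R u - p)) \<partial>lborel) \<le> ep_stores S P E0 p" .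
  qed
  finally show ?thesis .
qed

end


context
  fixes S :: "'i set" and Ebar P E0 :: "'i \<Rightarrow> real" and d :: "real \<Rightarrow> real" and T :: ereal
  assumes fin: "finite S" and Ppos: "\<forall>i\<in>S. P i > 0" and E0nn: "\<forall>i\<in>S. 0 \<le> E0 i"
    and dint: "\<forall>a\<ge>0. set_integrable lborel {0..a} d" and dnn: "\<forall>t\<ge>0. d t \<ge> 0"
    and Tpos: "T > 0"
begin

lemma GG:
  assumes gg: "is_ggddf_policy S Ebar P E0 d r"
  shows "\<exists>p\<ge>0. unserved S d r T + ep_stores S P E0 p = ep_demand d 0 T p"
proof -
  have pol: "is_policy S Ebar P E0 d r" using gg unfolding is_ggddf_policy_def by auto
  have AEr: "AE t in lborel. t \<ge> 0 \<longrightarrow> ggddf_rates S P (\<lambda>i. stored_energy E0 r i t) (d t) (\<lambda>i. r i t)"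
    using gg unfolding is_ggddf_policy_def by auto
  note pb = pol_basic[OF fin Ppos E0nn dint dnn pol]
  define Est where "Est i t = stored_energy E0 r i t" for i t
  have Est_eq: "\<And>i t. i \<in> S \<Longrightarrow> 0 \<le> t \<Longrightarrow> Est i t = E0 i - integral {0..t} (r i)"
    unfolding Est_def using pb(1) by blast
  have Est_nn: "\<And>i t. i \<in> S \<Longrightarrow> 0 \<le> t \<Longrightarrow> 0 \<le> Est i t"
    using pol unfolding is_policy_def Est_def by auto
  have rb: "\<And>i t. i \<in> S \<Longrightarrow> 0 \<le> t \<Longrightarrow> 0 \<le> r i t \<and> r i t \<le> P i"
    using pol unfolding is_policy_def by auto
  have rm: "\<And>i. i \<in> S \<Longrightarrow> r i \<in> borel_measurable lborel"
    using pol unfolding is_policy_def by auto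
  have rio: "\<And>i c t. i \<in> S \<Longrightarrow> 0 \<le> c \<Longrightarrow> r i integrable_on {c..t}"
  proof -
    fix i and c t :: real assume a: "i \<in> S" "0 \<le> c"
    show "r i integrable_on {c..t}" using rb[OF a(1)] a by (intro sb_integrable_on[where C="P i"] rm) auto
  qed
  have Est_split: "\<And>i c t. i \<in> S \<Longrightarrow> 0 \<le> c \<Longrightarrow> c \<le> t \<Longrightarrow> Est i t = Est i c - integral {c..t} (r i)"
  proof -
    fix i and c t :: real assume a: "i \<in> S" "0 \<le> c" "c \<le> t"
    have "integral {0..c} (r i) + integral {c..t} (r i) = integral {0..t} (r i)"
      using a by (intro Henstock_Kurzweil_Integration.integral_combine rio) auto
    then show "Est i t = Est i c - integral {c..t} (r i)" using Est_eq a by simp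
  qed
  have Est_mono: "\<And>i c t. i \<in> S \<Longrightarrow> 0 \<le> c \<Longrightarrow> c \<le> t \<Longrightarrow> Est i t \<le> Est i c"
  proof -
    fix i and c t :: real assume a: "i \<in> S" "0 \<le> c" "c \<le> t"
    have "0 \<le> integral {c..t} (r i)" using a rb by (intro integral_nonneg rio) auto
    then show "Est i t \<le> Est i c" using Est_split[OF a] by simp
  qed
  have Est_cont: "\<And>i b. i \<in> S \<Longrightarrow> continuous_on {0..b} (\<lambda>t. Est i t)"
  proof -
    fix i and b :: real assume i: "i \<in> S"
    have "continuous_on {0..b} (\<lambda>t. E0 i - integral {0..t} (r i))"
      by (intro continuous_intros indefinite_integral_continuous_1 rio i) simp
    then show "continuous_on {0..b} (\<lambda>t. Est i t)"
      by (rule continuous_on_eq) (use Est_eq i in auto)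
  qed
  define Ts where "Ts = {t::real. 0 \<le> t \<and> ereal t \<le> T}"
  have Tsm: "Ts \<in> sets lborel" unfolding Ts_def by (rule Tset_meas[OF fin Ppos E0nn dint dnn])
  define N where "N = {i\<in>S. \<forall>t\<in>Ts. 0 < Est i t}"
  have NS: "N \<subseteq> S" unfolding N_def by auto
  have ord: "\<And>i j t. i \<in> N \<Longrightarrow> j \<in> S - N \<Longrightarrow> t \<in> Ts \<Longrightarrow> Est j t / P j < Est i t / P i"
  proof (rule ccontr)
    fix i j t assume i: "i \<in> N" and j: "j \<in> S - N" and t: "t \<in> Ts" and nlt: "\<not> Est j t / P j < Est i t / P i"
    have iS: "i \<in> S" using i NS by auto
    have jS: "j \<in> S" using j by auto
    have pi: "0 < P i" and pj: "0 < P j" using Ppos iS jS by auto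
    obtain t1 where t1: "t1 \<in> Ts" "\<not> 0 < Est j t1" using j unfolding N_def by auto
    define t2 where "t2 = max t t1"
    have t0: "0 \<le> t" "0 \<le> t1" using t t1 unfolding Ts_def by auto
    have t2Ts: "t2 \<in> Ts" using t t1 unfolding Ts_def t2_def by (auto simp: max_def)
    define H where "H s = Est i s / P i - Est j s / P j" for s
    define h where "h s = r i s / P i - r j s / P j" for s
    have "H t2 \<le> 0"
    proof (rule mono_pos[of t t2 H h 2])
      have "continuous_on {0..t2} H" unfolding H_def
        using pi pj by (intro continuous_intros Est_cont iS jS) auto
      then show "continuous_on {t..t2} H" by (rule continuous_on_subset) (use t0 in auto)
      show "h \<in> borel_measurable lborel" unfolding h_def using rm iS jS by measurable
      show "\<bar>h s\<bar> \<le> 2" if "s \<in> {t..t2}" for s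
      proof -
        have "0 \<le> s" using that t0 by auto
        then have "0 \<le> r i s / P i" "r i s / P i \<le> 1" "0 \<le> r j s / P j" "r j s / P j \<le> 1"
          using rb[OF iS] rb[OF jS] pi pj by auto
        then show ?thesis unfolding h_def by linarith
      qed
      show "H s = H c - integral {c..s} h" if "t \<le> c" "c \<le> s" "s \<le> t2" for c s
      proof -
        have c0: "0 \<le> c" using that t0 by auto
        have "integral {c..s} h = integral {c..s} (\<lambda>x. r i x / P i) - integral {c..s} (\<lambda>x. r j x / P j)"
          unfolding h_def by (intro integral_diff integrable_on_divide rio iS jS c0)
        also have "\<dots> = integral {c..s} (r i) / P i - integral {c..s} (r j) / P j" by simp
        finally show ?thesis unfolding H_def using Est_split[OF iS c0 that(2)] Est_split[OF jS c0 that(2)]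
          by (simp add: diff_divide_distrib)
      qed
      show "AE s in lborel. t \<le> s \<longrightarrow> s \<le> t2 \<longrightarrow> 0 < H s \<longrightarrow> 0 \<le> h s"
        using AEr
      proof eventually_elim
        case (elim s)
        show ?case
        proof (intro impI)
          assume s: "t \<le> s" "s \<le> t2" "0 < H s"
          have s0: "0 \<le> s" using s t0 by auto
          have rule: "ggddf_rates S P (\<lambda>k. Est k s) (d s) (\<lambda>k. r k s)"
            using elim s0 unfolding Est_def by auto
          have "r j s / P j \<le> r i s / P i"
            using s(3) Est_nn[OF jS s0] rb[OF jS s0] rb[OF iS s0] unfolding H_def
            by (intro rule_order[OF rule Ppos iS jS]) auto
          then show "0 \<le> h s" unfolding h_def by simp
        qed
      qed
      show "H t \<le> 0" using nlt unfolding H_def by simp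
      show "t \<le> t2" unfolding t2_def by simp
    qed
    moreover have "Est j t2 \<le> 0" using Est_mono[OF jS t0(2), of t2] t1(2) unfolding t2_def by simp
    ultimately have "Est i t2 / P i \<le> 0" unfolding H_def using pj by (smt (verit) divide_nonpos_pos)
    then have "Est i t2 \<le> 0" using pi by (simp add: divide_le_0_iff)
    moreover have "0 < Est i t2" using i t2Ts unfolding N_def by auto
    ultimately show False by simp
  qed
  define pstar where "pstar = (\<Sum>i\<in>N. P i)"
  have pstar0: "0 \<le> pstar" unfolding pstar_def using Ppos NS by (intro sum_nonneg) (auto simp: less_imp_le subsetD)
  define R where "R t = (\<Sum>k\<in>S. r k t)" for t
  have Rm: "R \<in> borel_measurable lborel" unfolding R_def using pol_meas[OF fin Ppos E0nn dint dnn pol] by simp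
  have pw: "AE t in lborel. t \<in> Ts \<longrightarrow> (\<Sum>j\<in>S - N. r j t) = max 0 (R t - pstar) \<and> min (d t) pstar \<le> R t \<and> R t \<le> d t"
    using AEr
  proof eventually_elim
    case (elim t)
    show ?case
    proof
      assume t: "t \<in> Ts"
      then have t0: "0 \<le> t" unfolding Ts_def by auto
      have rule: "ggddf_rates S P (\<lambda>k. Est k t) (d t) (\<lambda>k. r k t)" using elim t0 unfolding Est_def by auto
      have Npos: "\<forall>i\<in>N. 0 < Est i t" using t unfolding N_def by auto
      have o: "\<forall>i\<in>N. \<forall>j\<in>S - N. Est j t / P j < Est i t / P i" using ord t by blast
      note rc = rule_char[OF rule fin Ppos NS Npos o]
      have "(\<Sum>j\<in>S - N. r j t) = max 0 (R t - pstar)" "min (d t) pstar \<le> R t"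
        unfolding R_def pstar_def using rc Est_nn rb t0 dnn by auto
      moreover have "R t \<le> d t" using pol t0 unfolding is_policy_def R_def by auto
      ultimately show "(\<Sum>j\<in>S - N. r j t) = max 0 (R t - pstar) \<and> min (d t) pstar \<le> R t \<and> R t \<le> d t" by simp
    qed
  qed
  have perj: "\<And>j. j \<in> S - N \<Longrightarrow> (\<integral>\<^sup>+t. indicator Ts t * ennreal (r j t) \<partial>lborel) = ennreal (E0 j)"
  proof -
    fix j assume j: "j \<in> S - N"
    have jS: "j \<in> S" using j by auto
    obtain t1 where t1: "t1 \<in> Ts" "\<not> 0 < Est j t1" using j unfolding N_def by auto
    have t10: "0 \<le> t1" using t1 unfolding Ts_def by auto
    have "E0 j \<le> integral {0..t1} (r j)" using t1(2) Est_eq[OF jS t10] by simp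
    have "ennreal (E0 j) \<le> ennreal (integral {0..t1} (r j))" by (rule ennreal_leI) fact
    also have "\<dots> = (\<integral>\<^sup>+t. indicator {0..t1} t * ennreal (r j t) \<partial>lborel)"
      using rb[OF jS] by (intro nn_Icc[symmetric, OF rm[OF jS], of _ _ "P j"]) auto
    also have "\<dots> \<le> (\<integral>\<^sup>+t. indicator Ts t * ennreal (r j t) \<partial>lborel)"
    proof (intro nn_integral_mono)
      fix s
      have "s \<in> {0..t1} \<Longrightarrow> s \<in> Ts" using t1(1) unfolding Ts_def by (auto intro: order_trans[of "ereal s" "ereal t1"])
      then show "indicator {0..t1} s * ennreal (r j s) \<le> indicator Ts s * ennreal (r j s)"
        by (auto simp: indicator_def)
    qed
    finally have lo: "ennreal (E0 j) \<le> (\<integral>\<^sup>+t. indicator Ts t * ennreal (r j t) \<partial>lborel)" .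
    have "(\<integral>\<^sup>+t. indicator Ts t * ennreal (r j t) \<partial>lborel) \<le> (\<integral>\<^sup>+t. indicator {0..} t * ennreal (r j t) \<partial>lborel)"
      unfolding Ts_def by (intro nn_integral_mono) (auto simp: indicator_def)
    also have "\<dots> \<le> ennreal (E0 j)"
    proof (rule half_line_le)
      show "(\<lambda>t. ennreal (r j t)) \<in> borel_measurable lborel" using rm[OF jS] by measurable
      fix M :: real assume M: "0 \<le> M"
      have "(\<integral>\<^sup>+t. indicator {0..M} t * ennreal (r j t) \<partial>lborel) = ennreal (integral {0..M} (r j))"
        using rb[OF jS] by (intro nn_Icc[OF rm[OF jS], of _ _ "P j"]) auto
      also have "\<dots> \<le> ennreal (E0 j)" using pb(3)[OF jS M] by (rule ennreal_leI)
      finally show "(\<integral>\<^sup>+t. indicator {0..M} t * ennreal (r j t) \<partial>lborel) \<le> ennreal (E0 j)" .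
    qed
    finally show "(\<integral>\<^sup>+t. indicator Ts t * ennreal (r j t) \<partial>lborel) = ennreal (E0 j)" using lo by simp
  qed
  have X: "(\<integral>\<^sup>+t. indicator Ts t * ennreal (max 0 (R t - pstar)) \<partial>lborel) = (\<Sum>j\<in>S - N. ennreal (E0 j))"
  proof -
    have "(\<integral>\<^sup>+t. indicator Ts t * ennreal (max 0 (R t - pstar)) \<partial>lborel)
        = (\<integral>\<^sup>+t. (\<Sum>j\<in>S - N. indicator Ts t * ennreal (r j t)) \<partial>lborel)"
      using pw
    proof (intro nn_integral_cong_AE, eventually_elim)
      case (elim t)
      show ?case
      proof (cases "t \<in> Ts")
        case True
        then have t0: "0 \<le> t" unfolding Ts_def by auto
        have "ennreal (max 0 (R t - pstar)) = ennreal (\<Sum>j\<in>S - N. r j t)" using elim True by simp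
        also have "\<dots> = (\<Sum>j\<in>S - N. ennreal (r j t))" using rb t0 by (intro sum_ennreal[symmetric]) auto
        finally show ?thesis using True by (simp add: sum_distrib_left)
      qed simp
    qed
    also have "\<dots> = (\<Sum>j\<in>S - N. \<integral>\<^sup>+t. indicator Ts t * ennreal (r j t) \<partial>lborel)"
      using Tsm rm by (intro nn_integral_sum) auto
    also have "\<dots> = (\<Sum>j\<in>S - N. ennreal (E0 j))" using perj by simp
    finally show ?thesis .
  qed
  have T0: "0 \<in> Ts" using Tpos unfolding Ts_def by (simp add: less_imp_le zero_ereal_def)
  have Est0: "\<And>k. k \<in> S \<Longrightarrow> Est k 0 = E0 k" using Est_eq by simp
  have ord0: "\<And>i j. i \<in> N \<Longrightarrow> j \<in> S - N \<Longrightarrow> E0 j / P j < E0 i / P i"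
    using ord[OF _ _ T0] Est0 NS by (metis Diff_iff subsetD)
  have ESp: "ep_stores S P E0 pstar = (\<Sum>j\<in>S - N. ennreal (E0 j))"
  proof -
    have pwu: "indicator {0..} u * ennreal (max 0 (burst_power S P E0 u - pstar))
        = (\<Sum>j\<in>S - N. ennreal (P j) * indicator {0..E0 j / P j} u)" for u :: real
    proof (cases "0 \<le> u")
      case False
      then show ?thesis by simp
    next
      case u0: True
      define f where "f k = P k * indicator {..E0 k / P k} u" for k
      have fnn: "\<And>k. k \<in> S \<Longrightarrow> 0 \<le> f k" unfolding f_def using Ppos by (auto simp: indicator_def)
      have bsplit: "burst_power S P E0 u = (\<Sum>j\<in>S - N. f j) + (\<Sum>i\<in>N. f i)"
        unfolding burst_eq[OF fin] f_def[symmetric] using fin NS by (simp add: sum.subset_diff)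
      have real_id: "max 0 (burst_power S P E0 u - pstar) = (\<Sum>j\<in>S - N. f j)"
      proof (cases "\<exists>j\<in>S - N. u \<le> E0 j / P j")
        case True
        then obtain j where j: "j \<in> S - N" "u \<le> E0 j / P j" by auto
        have "\<forall>i\<in>N. f i = P i" unfolding f_def using ord0 j by (force simp: indicator_def)
        then have "(\<Sum>i\<in>N. f i) = pstar" unfolding pstar_def by simp
        moreover have "0 \<le> (\<Sum>j\<in>S - N. f j)" using fnn by (intro sum_nonneg) auto
        ultimately show ?thesis using bsplit by simp
      next
        case False
        then have z: "(\<Sum>j\<in>S - N. f j) = 0" unfolding f_def by (intro sum.neutral) (auto simp: indicator_def)
        have "(\<Sum>i\<in>N. f i) \<le> pstar" unfolding pstar_def f_def using NS Ppos
          by (intro sum_mono) (auto simp: indicator_def less_imp_le subsetD)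
        then show ?thesis using bsplit z by simp
      qed
      have "indicator {0..} u * ennreal (max 0 (burst_power S P E0 u - pstar)) = ennreal (\<Sum>j\<in>S - N. f j)"
        using u0 real_id by simp
      also have "\<dots> = (\<Sum>j\<in>S - N. ennreal (f j))" using fnn by (intro sum_ennreal[symmetric]) auto
      also have "\<dots> = (\<Sum>j\<in>S - N. ennreal (P j) * indicator {0..E0 j / P j} u)"
        unfolding f_def using u0 by (intro sum.cong refl) (auto simp: indicator_def)
      finally show ?thesis .
    qed
    have "ep_stores S P E0 pstar = (\<integral>\<^sup>+u. (\<Sum>j\<in>S - N. ennreal (P j) * indicator {0..E0 j / P j} u) \<partial>lborel)"
      unfolding ep_stores_def pwu ..
    also have "\<dots> = (\<Sum>j\<in>S - N. ennreal (P j) * emeasure lborel {0..E0 j / P j})"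
      by (subst nn_integral_sum) (auto simp: nn_integral_cmult_indicator)
    also have "\<dots> = (\<Sum>j\<in>S - N. ennreal (E0 j))"
    proof (intro sum.cong refl)
      fix j assume j: "j \<in> S - N"
      have pj: "0 < P j" and e: "0 \<le> E0 j" using Ppos E0nn j by auto
      then have tj: "0 \<le> E0 j / P j" by auto
      have "ennreal (P j) * ennreal (E0 j / P j) = ennreal (P j * (E0 j / P j))"
        using pj tj by (simp only: ennreal_mult less_imp_le)
      also have "P j * (E0 j / P j) = E0 j" using pj by simp
      finally show "ennreal (P j) * emeasure lborel {0..E0 j / P j} = ennreal (E0 j)"
        using tj by (simp only: emeasure_lborel_Icc diff_zero)
    qed
    finally show ?thesis .
  qed
  define D where "D t = (if 0 \<le> t then d t else 0)" for t
  have Dm: "D \<in> borel_measurable lborel" unfolding D_def using D_meas[OF dint] .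
  have U: "unserved S d r T + (\<integral>\<^sup>+t. indicator Ts t * ennreal (max 0 (R t - pstar)) \<partial>lborel) = ep_demand d 0 T pstar"
  proof -
    have "unserved S d r T = (\<integral>\<^sup>+t. indicator Ts t * ennreal (max (D t - R t) 0) \<partial>lborel)"
      unfolding unserved_def Ts_def D_def R_def by (intro nn_integral_cong) (auto simp: indicator_def)
    then have "unserved S d r T + (\<integral>\<^sup>+t. indicator Ts t * ennreal (max 0 (R t - pstar)) \<partial>lborel)
        = (\<integral>\<^sup>+t. indicator Ts t * ennreal (max (D t - R t) 0) + indicator Ts t * ennreal (max 0 (R t - pstar)) \<partial>lborel)"
      using Tsm Dm Rm by (simp add: nn_integral_add)
    also have "\<dots> = (\<integral>\<^sup>+t. indicator Ts t * ennreal (max 0 (D t - pstar)) \<partial>lborel)"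
      using pw
    proof (intro nn_integral_cong_AE, eventually_elim)
      case (elim t)
      show ?case
      proof (cases "t \<in> Ts")
        case True
        then have t0: "0 \<le> t" unfolding Ts_def by auto
        have h: "min (D t) pstar \<le> R t" "R t \<le> D t" using elim True t0 unfolding D_def by auto
        have "max (D t - R t) 0 + max 0 (R t - pstar) = max 0 (D t - pstar)"
          using h by (auto simp: min_def max_def split: if_splits)
        then have "ennreal (max (D t - R t) 0) + ennreal (max 0 (R t - pstar)) = ennreal (max 0 (D t - pstar))"
          by (metis ennreal_plus max.cobounded1 max.cobounded2)
        then show ?thesis using True by simp
      qed simp
    qed
    also have "\<dots> = ep_demand d 0 T pstar"
      unfolding ep_demand_def Ts_def D_def by (intro nn_integral_cong) (auto simp: indicator_def)
    finally show ?thesis .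
  qed
  show ?thesis using U X ESp pstar0 by (intro exI[of _ pstar]) simp
qed

end


context
  fixes S :: "'i set" and Ebar P E0 :: "'i \<Rightarrow> real" and d :: "real \<Rightarrow> real"
  assumes fin: "finite S" and Ppos: "\<forall>i\<in>S. P i > 0" and E0b: "\<forall>i\<in>S. 0 \<le> E0 i \<and> E0 i \<le> Ebar i"
    and dint: "\<forall>a\<ge>0. set_integrable lborel {0..a} d" and dnn: "\<forall>t\<ge>0. d t \<ge> 0"
begin

lemma EX: "\<exists>r. is_ggddf_policy S Ebar P E0 d r"
proof -
  define D where "D t = (if 0 \<le> t then d t else 0)" for t
  have Dm: "D \<in> borel_measurable lborel" unfolding D_def using D_meas[OF dint] .
  have Dnn: "\<forall>t. 0 \<le> D t" unfolding D_def using dnn by auto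
  have E0nn: "\<forall>i\<in>S. 0 \<le> E0 i" using E0b by auto
  obtain \<rho> where Q: "Qp S P D 0 E0 \<rho>"
    using exist_induct[OF fin Ppos Dm Dnn, of E0 "card (cls S P E0)" 0] E0nn by auto
  have rm: "\<And>i. i \<in> S \<Longrightarrow> \<rho> i \<in> borel_measurable lborel" using Q unfolding Qp_def by auto
  have rb: "\<And>i t. i \<in> S \<Longrightarrow> 0 \<le> \<rho> i t \<and> \<rho> i t \<le> P i" using Q unfolding Qp_def by auto
  have st: "\<And>i t. i \<in> S \<Longrightarrow> stored_energy E0 \<rho> i t = E0 i - integral {0..t} (\<rho> i)"
  proof -
    fix i and t :: real assume i: "i \<in> S"
    show "stored_energy E0 \<rho> i t = E0 i - integral {0..t} (\<rho> i)"
      unfolding stored_energy_def using rb[OF i] by (subst sb_LINT_eq[OF rm[OF i], of _ _ "P i"]) auto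
  qed
  have inn: "\<And>i t. i \<in> S \<Longrightarrow> 0 \<le> integral {0..t} (\<rho> i)"
  proof -
    fix i and t :: real assume i: "i \<in> S"
    show "0 \<le> integral {0..t} (\<rho> i)"
      using rb[OF i] by (intro integral_nonneg sb_integrable_on[OF rm[OF i], of _ _ "P i"]) auto
  qed
  show ?thesis
  proof (intro exI[of _ \<rho>])
    show "is_ggddf_policy S Ebar P E0 d \<rho>"
      unfolding is_ggddf_policy_def is_policy_def
    proof (intro conjI ballI allI impI)
      fix i and t :: real assume i: "i \<in> S" and t: "0 \<le> t"
      show "0 \<le> stored_energy E0 \<rho> i t" using Q i t st[OF i] unfolding Qp_def by auto
      show "stored_energy E0 \<rho> i t \<le> Ebar i" using st[OF i] inn[OF i, of t] E0b i by auto
    next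
      fix t :: real assume t: "0 \<le> t"
      show "(\<Sum>i\<in>S. \<rho> i t) \<le> d t" using Q t unfolding Qp_def D_def by auto
    next
      have "AE t in lborel. 0 \<le> t \<longrightarrow> ggddf_rates S P (\<lambda>i. E0 i - integral {0..t} (\<rho> i)) (D t) (\<lambda>i. \<rho> i t)"
        using Q unfolding Qp_def by auto
      then show "AE t in lborel. 0 \<le> t \<longrightarrow> ggddf_rates S P (\<lambda>i. stored_energy E0 \<rho> i t) (d t) (\<lambda>i. \<rho> i t)"
      proof (rule eventually_mono)
        fix t :: real
        assume h: "0 \<le> t \<longrightarrow> ggddf_rates S P (\<lambda>i. E0 i - integral {0..t} (\<rho> i)) (D t) (\<lambda>i. \<rho> i t)"
        show "0 \<le> t \<longrightarrow> ggddf_rates S P (\<lambda>i. stored_energy E0 \<rho> i t) (d t) (\<lambda>i. \<rho> i t)"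
        proof
          assume t: "0 \<le> t"
          have "ggddf_rates S P (\<lambda>i. E0 i - integral {0..t} (\<rho> i)) (d t) (\<lambda>i. \<rho> i t)"
            using h t unfolding D_def by simp
          moreover have "\<forall>i\<in>S. stored_energy E0 \<rho> i t = E0 i - integral {0..t} (\<rho> i)" using st by auto
          ultimately show "ggddf_rates S P (\<lambda>i. stored_energy E0 \<rho> i t) (d t) (\<lambda>i. \<rho> i t)"
            using ggddf_rates_cong[of S "\<lambda>i. stored_energy E0 \<rho> i t" "\<lambda>i. E0 i - integral {0..t} (\<rho> i)" "\<lambda>i. \<rho> i t" "\<lambda>i. \<rho> i t" P "d t"]
            by simp
        qed
      qed
    qed (use rm rb in auto)
  qed
qed

end

theorem theorem1:
  fixes S :: "'i set" and Ebar P E0 :: "'i \<Rightarrow> real" and d :: "real \<Rightarrow> real" and T :: ereal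
  assumes "finite S"
    and "\<forall>i\<in>S. Ebar i > 0" and "\<forall>i\<in>S. P i > 0"
    and "\<forall>i\<in>S. 0 \<le> E0 i \<and> E0 i \<le> Ebar i"
    and "\<forall>t\<ge>0. d t \<ge> 0"
    and "\<forall>a\<ge>0. set_integrable lborel {0..a} d"
    and "T > 0"
  shows "(\<exists>r. is_ggddf_policy S Ebar P E0 d r) \<and>
         (\<forall>r. is_ggddf_policy S Ebar P E0 d r \<longrightarrow>
              (\<forall>r'. is_policy S Ebar P E0 d r' \<longrightarrow> unserved S d r T \<le> unserved S d r' T) \<and>
              (\<exists>p\<ge>0. enn2ereal (unserved S d r T) =
                       enn2ereal (ep_demand d 0 T p) - enn2ereal (ep_stores S P E0 p)) \<and>
              (\<forall>p\<ge>0. enn2ereal (ep_demand d 0 T p) - enn2ereal (ep_stores S P E0 p)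
                       \<le> enn2ereal (unserved S d r T)))"
proof -
  note fin = assms(1) and Ppos = assms(3) and E0b = assms(4) and dnn = assms(5) and dint = assms(6) and Tpos = assms(7)
  have E0nn: "\<forall>i\<in>S. 0 \<le> E0 i" using E0b by auto
  have esfin: "\<And>p. 0 \<le> p \<Longrightarrow> ep_stores S P E0 p \<noteq> top"
    using ES_fin[OF fin Ppos E0nn dint dnn] by (simp add: infinity_ennreal_def)
  show ?thesis
  proof (intro conjI)
    show "\<exists>r. is_ggddf_policy S Ebar P E0 d r" by (rule EX[OF fin Ppos E0b dint dnn])
  next
    show "\<forall>r. is_ggddf_policy S Ebar P E0 d r \<longrightarrow>
              (\<forall>r'. is_policy S Ebar P E0 d r' \<longrightarrow> unserved S d r T \<le> unserved S d r' T) \<and>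
              (\<exists>p\<ge>0. enn2ereal (unserved S d r T) =
                       enn2ereal (ep_demand d 0 T p) - enn2ereal (ep_stores S P E0 p)) \<and>
              (\<forall>p\<ge>0. enn2ereal (ep_demand d 0 T p) - enn2ereal (ep_stores S P E0 p)
                       \<le> enn2ereal (unserved S d r T))"
    proof (intro allI impI)
    fix r assume gg: "is_ggddf_policy S Ebar P E0 d r"
    have pol: "is_policy S Ebar P E0 d r" using gg unfolding is_ggddf_policy_def by auto
    obtain ps where ps: "0 \<le> ps" "unserved S d r T + ep_stores S P E0 ps = ep_demand d 0 T ps"
      using GG[OF fin Ppos E0nn dint dnn Tpos gg] by auto
    have A: "\<forall>r'. is_policy S Ebar P E0 d r' \<longrightarrow> unserved S d r T \<le> unserved S d r' T"
    proof (intro allI impI)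
      fix r' assume pol': "is_policy S Ebar P E0 d r'"
      have "unserved S d r T + ep_stores S P E0 ps \<le> unserved S d r' T + ep_stores S P E0 ps"
        using ps(2) LB[OF fin Ppos E0nn dint dnn pol' ps(1), of T] by simp
      then show "unserved S d r T \<le> unserved S d r' T"
        using esfin[OF ps(1)] by (simp add: add.commute[of _ "ep_stores S P E0 ps"] ennreal_add_left_cancel_le infinity_ennreal_def)
    qed
    have B: "\<exists>p\<ge>0. enn2ereal (unserved S d r T) = enn2ereal (ep_demand d 0 T p) - enn2ereal (ep_stores S P E0 p)"
      using ereal_sub_eq[OF ps(2) esfin[OF ps(1)]] ps(1) by blast
    have C: "\<forall>p\<ge>0. enn2ereal (ep_demand d 0 T p) - enn2ereal (ep_stores S P E0 p) \<le> enn2ereal (unserved S d r T)"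
      using ereal_sub_le[OF LB[OF fin Ppos E0nn dint dnn pol] esfin] by blast
    show "(\<forall>r'. is_policy S Ebar P E0 d r' \<longrightarrow> unserved S d r T \<le> unserved S d r' T) \<and>
              (\<exists>p\<ge>0. enn2ereal (unserved S d r T) =
                       enn2ereal (ep_demand d 0 T p) - enn2ereal (ep_stores S P E0 p)) \<and>
              (\<forall>p\<ge>0. enn2ereal (ep_demand d 0 T p) - enn2ereal (ep_stores S P E0 p)
                       \<le> enn2ereal (unserved S d r T))" using A B C by blast
  qed
  qed
qed


end
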